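(* Let $H$ be a separable infinite-dimensional complex Hilbert space, let $D \subset H\setminus\{0\}$ be a countable dense subset of $H$, and let $R>0$. Let $B_R=\{T\in L(H): \|T\|\le R\}$. Then the set $L_{SC}(D)$ of operators $T\in B_R$ for which every $x\in D$ is a supercyclic vector is a dense $G_\delta$ subset of $B_R$ equipped with the strong operator topology. Moreover, for every $T\in L_{SC}(D)$ the set of supercyclic vectors of $T$ is residual in $H$ with respect to the norm topology.
   Context: $L(H)$ denotes the bounded linear operators on $H$. For $T\in L(H)$, a vector $x\in H$ is supercyclic for $T$ if the set $\mathbb{C}\{x,Tx,T^2x,\dots\}=\{aT^nx: a\in\mathbb{C}, n\ge 0\}$ is norm-dense in $H$. *)

theory Defs
  imports "HOL-Analysis.Analysis"
begin

text \<open>A complex Hilbert space is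
encoded as a (real) Hilbert space, i.e. a complete real inner product space, together with
a complex scalar multiplication extending the real one and satisfying the module axioms and
the norm identity. The complex inner product is then recovered by the polarisation formula
below; conversely, every complex Hilbert space (with its underlying real structure and
real inner product Re of the complex one) is an instance of this class.\<close>

class complex_hilbert = real_inner + complete_space +
  fixes scaleC :: "complex \<Rightarrow> 'a \<Rightarrow> 'a"  (infixr \<open>*\<^sub>C\<close> 75)
  assumes scaleC_of_real: "scaleC (complex_of_real r) x = r *\<^sub>R x"
    and scaleC_add_right: "scaleC a (x + y) = scaleC a x + scaleC a y"
    and scaleC_add_left: "scaleC (a + b) x = scaleC a x + scaleC b x"
    and scaleC_scaleC: "scaleC a (scaleC b x) = scaleC (a * b) x"
    and scaleC_one: "scaleC 1 x = x"
    and norm_scaleC: "norm (scaleC a x) = cmod a * norm x"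

context complex_hilbert
begin

text \<open>The complex inner product (conjugate-linear in the first argument).\<close>
definition cinner :: "'a \<Rightarrow> 'a \<Rightarrow> complex" where
  "cinner x y = Complex (inner x y) (inner x (scaleC \<i> y) * -1)"

definition cspan :: "'a set \<Rightarrow> 'a set" where
  "cspan B = {\<Sum>b\<in>F. scaleC (c b) b | F c. finite F \<and> F \<subseteq> B}"

definition infinite_dimensional :: "'a itself \<Rightarrow> bool" where
  "infinite_dimensional _ \<longleftrightarrow> \<not> (\<exists>B. finite B \<and> cspan B = (UNIV :: 'a set))"

end

text \<open>L(H): bounded complex-linear operators, as elements of the type of bounded
real-linear operators that in addition commute with complex scalars. The norm of a
blinfun is the operator norm.\<close>
definition clinear_op :: "('a::complex_hilbert \<Rightarrow>\<^sub>L 'a) \<Rightarrow> bool" where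
  "clinear_op T \<longleftrightarrow> (\<forall>c x. blinfun_apply T (scaleC c x) = scaleC c (blinfun_apply T x))"

definition ball_ops :: "real \<Rightarrow> ('a::complex_hilbert \<Rightarrow>\<^sub>L 'a) set" where
  "ball_ops R = {T. clinear_op T \<and> norm T \<le> R}"

definition supercyclic :: "('a::complex_hilbert \<Rightarrow>\<^sub>L 'a) \<Rightarrow> 'a \<Rightarrow> bool" where
  "supercyclic T x \<longleftrightarrow>
     closure {scaleC a ((blinfun_apply T ^^ n) x) | a n. True} = UNIV"

definition residual :: "'a::topological_space set \<Rightarrow> bool" where
  "residual S \<longleftrightarrow> (\<exists>U :: nat \<Rightarrow> 'a set. (\<forall>n. open (U n) \<and> closure (U n) = UNIV)
                     \<and> (\<Inter>n. U n) \<subseteq> S)"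

end

theory Submission
  imports Defs
begin

definition JJ :: "'a::complex_hilbert \<Rightarrow> 'a" where "JJ x = scaleC \<i> x"

lemma scaleC_real: "scaleC (complex_of_real r) x = r *\<^sub>R (x::'a::complex_hilbert)"
  by (rule scaleC_of_real)

lemma scaleC_zero_left[simp]: "scaleC 0 (x::'a::complex_hilbert) = 0"
  using scaleC_of_real[of 0 x] by simp

lemma scaleC_decomp: "scaleC c (x::'a::complex_hilbert) = Re c *\<^sub>R x + Im c *\<^sub>R JJ x"
proof -
  have c: "c = complex_of_real (Re c) + complex_of_real (Im c) * \<i>"
    by (simp add: complex_eq_iff)
  have "scaleC c x = scaleC (complex_of_real (Re c)) x + scaleC (complex_of_real (Im c) * \<i>) x"
    by (subst c, rule scaleC_add_left)
  also have "\<dots> = Re c *\<^sub>R x + Im c *\<^sub>R JJ x"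
    by (simp add: scaleC_of_real JJ_def flip: scaleC_scaleC)
  finally show ?thesis .
qed

lemma JJ_add: "JJ (x + y) = JJ x + JJ (y::'a::complex_hilbert)"
  by (simp add: JJ_def scaleC_add_right)

lemma JJ_scaleR: "JJ (r *\<^sub>R x) = r *\<^sub>R JJ (x::'a::complex_hilbert)"
proof -
  have "JJ (r *\<^sub>R x) = scaleC \<i> (scaleC (complex_of_real r) x)" by (simp add: JJ_def scaleC_of_real)
  also have "\<dots> = scaleC (complex_of_real r) (scaleC \<i> x)" by (simp add: scaleC_scaleC mult.commute)
  finally show ?thesis by (simp add: JJ_def scaleC_of_real)
qed

lemma JJ_JJ[simp]: "JJ (JJ x) = - (x::'a::complex_hilbert)"
proof -
  have "JJ (JJ x) = scaleC (complex_of_real (-1)) x" by (simp add: JJ_def scaleC_scaleC)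
  also have "\<dots> = - x" by (simp only: scaleC_of_real) simp
  finally show ?thesis .
qed

lemma linear_JJ: "linear (JJ::'a::complex_hilbert \<Rightarrow> 'a)"
  by (simp add: linearI JJ_add JJ_scaleR)

lemma norm_JJ[simp]: "norm (JJ x) = norm (x::'a::complex_hilbert)"
  by (simp add: JJ_def norm_scaleC)

lemma bounded_linear_JJ: "bounded_linear (JJ::'a::complex_hilbert \<Rightarrow> 'a)"
  by (rule bounded_linear_intro[where K=1]) (auto simp: JJ_add JJ_scaleR)

lemma JJ_minus[simp]: "JJ (- x) = - JJ (x::'a::complex_hilbert)"
  using JJ_scaleR[of "-1" x] by simp
lemma JJ_diff: "JJ (x - y) = JJ x - JJ (y::'a::complex_hilbert)"
  using JJ_add[of x "-y"] by simp
lemma JJ_zero[simp]: "JJ 0 = (0::'a::complex_hilbert)"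
  using JJ_scaleR[of 0] by simp
lemma JJ_sum: "JJ (sum f A) = sum (\<lambda>i. JJ (f i)) (A::'b set)" for f :: "'b \<Rightarrow> 'a::complex_hilbert"
  by (induct A rule: infinite_finite_induct) (auto simp: JJ_add)

lemma inner_JJ_JJ[simp]: "inner (JJ x) (JJ y) = inner x (y::'a::complex_hilbert)"
proof -
  have "norm (JJ x + JJ y) = norm (x + y)" by (metis JJ_add norm_JJ)
  moreover have "norm (JJ x - JJ y) = norm (x - y)" by (metis JJ_diff norm_JJ)
  ultimately have "(norm (JJ x + JJ y))\<^sup>2 - (norm (JJ x - JJ y))\<^sup>2 = (norm (x + y))\<^sup>2 - (norm (x - y))\<^sup>2"
    by simp
  then show ?thesis
    by (simp add: power2_norm_eq_inner inner_add inner_diff inner_commute algebra_simps)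
qed

lemma inner_JJ_left: "inner (JJ x) y = - inner x (JJ (y::'a::complex_hilbert))"
  using inner_JJ_JJ[of x "JJ y"] by simp

lemma inner_JJ_self[simp]: "inner x (JJ (x::'a::complex_hilbert)) = 0"
  using inner_JJ_left[of x x] by (simp add: inner_commute)
lemma inner_JJ_self'[simp]: "inner (JJ x) (x::'a::complex_hilbert) = 0"
  using inner_JJ_self by (simp add: inner_commute)

lemma clinear_op_iff: "clinear_op T \<longleftrightarrow> (\<forall>x. blinfun_apply T (JJ x) = JJ (blinfun_apply T x))"
proof
  assume "clinear_op T" then show "\<forall>x. blinfun_apply T (JJ x) = JJ (blinfun_apply T x)"
    by (simp add: clinear_op_def JJ_def)
next
  assume H: "\<forall>x. blinfun_apply T (JJ x) = JJ (blinfun_apply T x)"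
  show "clinear_op T" unfolding clinear_op_def
    by (simp add: scaleC_decomp blinfun.add_right blinfun.scaleR_right H)
qed

lemma orthogonal_extension_aux_gen:
  fixes S :: "'a::real_inner set"
  assumes "finite T" "finite S" "pairwise orthogonal S"
    shows "\<exists>U. finite U \<and> pairwise orthogonal (S \<union> U) \<and> span (S \<union> U) = span (S \<union> T)"
using assms
proof (induction arbitrary: S)
  case empty then show ?case
    by (rule_tac x="{}" in exI) simp
next
  case (insert a T)
  have 0: "\<And>x y. \<lbrakk>x \<noteq> y; x \<in> S; y \<in> S\<rbrakk> \<Longrightarrow> x \<bullet> y = 0"
    using insert by (simp add: pairwise_def orthogonal_def)
  define a' where "a' = a - (\<Sum>b\<in>S. (b \<bullet> a / (b \<bullet> b)) *\<^sub>R b)"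
  have orthS: "\<And>x. x \<in> S \<Longrightarrow> a' \<bullet> x = 0"
  proof -
    fix x assume "x \<in> S"
    have "a \<bullet> x = (\<Sum>y\<in>S. if y = x then y \<bullet> a else 0)"
      by (simp add: \<open>finite S\<close> inner_commute \<open>x \<in> S\<close>)
    also have "\<dots> =  (\<Sum>b\<in>S. b \<bullet> a * (b \<bullet> x) / (b \<bullet> b))"
      apply (rule sum.cong [OF refl], simp)
      by (metis "0" \<open>x \<in> S\<close> inner_commute)
    finally show "a' \<bullet> x = 0"
      by (simp add: a'_def algebra_simps inner_sum_left)
  qed
  have po: "pairwise orthogonal (insert a' S)"
  proof -
    have "pairwise orthogonal S" using insert.prems by blast
    moreover have "\<forall>y\<in>S. a' \<noteq> y \<longrightarrow> orthogonal a' y \<and> orthogonal y a'"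
      using orthS by (auto simp: orthogonal_def inner_commute)
    ultimately show ?thesis unfolding pairwise_insert by metis
  qed
  obtain U where U: "finite U" and orthU: "pairwise orthogonal (insert a' S \<union> U)"
             and spanU: "span (insert a' S \<union> U) = span (insert a' S \<union> T)"
    using insert.IH [of "insert a' S"] po insert.prems by auto
  have "span (S \<union> insert a' U) = span (insert a' (S \<union> T))"
    using spanU by simp
  also have "\<dots> = span (insert a (S \<union> T))"
    by (simp add: a'_def span_neg span_sum span_base span_mul eq_span_insert_eq)
  also have "\<dots> = span (S \<union> insert a T)"
    by simp
  finally show ?case
    using orthU U by (rule_tac x="insert a' U" in exI) auto
qed

lemma proj_exists:
  fixes V :: "'a::real_inner set"
  assumes "finite V"
  shows "\<exists>P. linear P \<and> (\<forall>z. P z \<in> span V) \<and> (\<forall>z. \<forall>w\<in>span V. inner w (z - P z) = 0)"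
proof -
  obtain U where U: "finite U" "pairwise orthogonal U" "span U = span V"
    using orthogonal_extension_aux_gen[of V "{}"] assms by auto
  define P where "P z = (\<Sum>b\<in>U. (b \<bullet> z / (b \<bullet> b)) *\<^sub>R b)" for z
  have lin: "linear P" unfolding P_def
    by (rule linearI) (auto simp: inner_add_right scaleR_add_left sum.distrib add_divide_distrib
        scaleR_sum_right sum_divide_distrib)
  have inspan: "P z \<in> span V" for z
    unfolding P_def U(3)[symmetric] by (intro span_sum span_mul span_base)
  have orth1: "x \<bullet> (z - P z) = 0" if "x \<in> U" for x z
  proof -
    have "z \<bullet> x = (\<Sum>y\<in>U. if y = x then y \<bullet> z else 0)"
      by (simp add: \<open>finite U\<close> inner_commute that)
    also have "\<dots> =  (\<Sum>b\<in>U. b \<bullet> z * (b \<bullet> x) / (b \<bullet> b))"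
      apply (rule sum.cong [OF refl], simp)
      using U(2) that by (auto simp: pairwise_def orthogonal_def inner_commute)
    finally show ?thesis
      by (simp add: P_def algebra_simps inner_sum_right inner_commute)
  qed
  have "inner w (z - P z) = 0" if "w \<in> span V" for w z
  proof -
    have "w \<in> span U" using that U(3) by simp
    then show ?thesis
      by (rule span_induct) (auto simp: orth1 subspace_def inner_add_left)
  qed
  then show ?thesis using lin inspan by blast
qed

lemma proj_pyth:
  assumes "p \<in> E" "\<forall>w\<in>E. inner w (z - p) = 0"
  shows "(norm z)\<^sup>2 = (norm p)\<^sup>2 + (norm (z - p))\<^sup>2"
proof -
  have h: "inner p (z - p) = 0" using assms by auto
  define q where "q = z - p"
  have "z = p + q" by (simp add: q_def)
  then show ?thesis using h unfolding q_def[symmetric]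
    by (simp add: power2_norm_eq_inner inner_add_left inner_add_right inner_commute)
qed

lemma proj_le:
  assumes "p \<in> E" "\<forall>w\<in>E. inner w (z - p) = 0"
  shows "norm p \<le> norm z"
  using proj_pyth[OF assms] by (metis le_add_same_cancel1 norm_ge_zero power2_le_imp_le zero_le_power2)

lemma proj_best:
  assumes "subspace E" "p \<in> E" "\<forall>w\<in>E. inner w (z - p) = 0" "f \<in> E"
  shows "norm (z - p) \<le> norm (z - f)"
proof -
  have "p - f \<in> E" using assms by (simp add: subspace_diff)
  then have "\<forall>w\<in>E. inner w ((z - f) - (p - f)) = 0" using assms by simp
  from proj_pyth[OF \<open>p - f \<in> E\<close> this] show ?thesis
    by (simp add: power2_le_imp_le)
qed

lemma proj_unique:
  assumes "subspace E" "p \<in> E" "\<forall>w\<in>E. inner w (z - p) = 0"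
    and "p' \<in> E" "\<forall>w\<in>E. inner w (z - p') = 0"
  shows "p = p'"
proof -
  have d: "p - p' \<in> E" using assms by (simp add: subspace_diff)
  have "inner (p - p') (z - p') - inner (p - p') (z - p) = 0" using assms d by auto
  then have "inner (p - p') (p - p') = 0" by (simp add: inner_diff_right inner_diff_left)
  then show ?thesis by simp
qed

lemma proj_fix:
  assumes "subspace E" "p \<in> E" "\<forall>w\<in>E. inner w (z - p) = 0" "z \<in> E"
  shows "p = z"
  using proj_unique[OF assms(1-3), of z] assms by simp

lemma scaleR_scaleC: "r *\<^sub>R scaleC c (x::'a::complex_hilbert) = scaleC (complex_of_real r * c) x"
  by (metis scaleC_of_real scaleC_scaleC)

lemma cspanI:
  assumes "finite F" "F \<subseteq> S" shows "(\<Sum>b\<in>F. scaleC (c b) b) \<in> cspan (S::'a::complex_hilbert set)"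
  unfolding cspan_def by (rule CollectI, rule exI[of _ F], rule exI[of _ c]) (simp add: assms)

lemma cspan_add:
  assumes "u \<in> cspan S" "v \<in> cspan S" shows "u + v \<in> cspan (S::'a::complex_hilbert set)"
proof -
  obtain F c where F: "finite F" "F \<subseteq> S" "u = (\<Sum>b\<in>F. scaleC (c b) b)" using assms(1) by (auto simp: cspan_def)
  obtain G d where G: "finite G" "G \<subseteq> S" "v = (\<Sum>b\<in>G. scaleC (d b) b)" using assms(2) by (auto simp: cspan_def)
  define e where "e b = (if b \<in> F then c b else 0) + (if b \<in> G then d b else 0)" for b
  have 1: "(\<Sum>b\<in>F\<union>G. scaleC (if b \<in> F then c b else 0) b) = (\<Sum>b\<in>F. scaleC (c b) b)"
    by (rule sum.mono_neutral_cong_right) (use F G in auto)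
  have 2: "(\<Sum>b\<in>F\<union>G. scaleC (if b \<in> G then d b else 0) b) = (\<Sum>b\<in>G. scaleC (d b) b)"
    by (rule sum.mono_neutral_cong_right) (use F G in auto)
  have "u + v = (\<Sum>b\<in>F\<union>G. scaleC (e b) b)"
    unfolding e_def scaleC_add_left sum.distrib 1 2 F(3) G(3) ..
  then show ?thesis using cspanI[of "F \<union> G" S e] F G by simp
qed

lemma cspan_scaleR:
  assumes "u \<in> cspan S" shows "r *\<^sub>R u \<in> cspan (S::'a::complex_hilbert set)"
proof -
  obtain F c where F: "finite F" "F \<subseteq> S" "u = (\<Sum>b\<in>F. scaleC (c b) b)" using assms(1) by (auto simp: cspan_def)
  have "r *\<^sub>R u = (\<Sum>b\<in>F. scaleC (complex_of_real r * c b) b)"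
    by (simp add: F(3) scaleR_sum_right scaleR_scaleC)
  then show ?thesis using cspanI[of F S "\<lambda>b. complex_of_real r * c b"] F by simp
qed

lemma subspace_cspan: "subspace (cspan (S::'a::complex_hilbert set))"
proof (rule subspaceI)
  show "0 \<in> cspan S" unfolding cspan_def by (rule CollectI, rule exI[of _ "{}"]) auto
qed (auto intro: cspan_add cspan_scaleR)

lemma span_JJ_sub_cspan: "span (S \<union> JJ ` S) \<subseteq> cspan (S::'a::complex_hilbert set)"
proof (rule span_minimal[OF _ subspace_cspan])
  have "s \<in> cspan S" if "s \<in> S" for s
  proof -
    have "s = (\<Sum>b\<in>{s}. scaleC 1 b)" by (simp add: scaleC_one)
    then show ?thesis using cspanI[of "{s}" S "\<lambda>_. 1"] that by simp
  qed
  moreover have "JJ s \<in> cspan S" if "s \<in> S" for s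
  proof -
    have "JJ s = (\<Sum>b\<in>{s}. scaleC \<i> b)" by (simp add: JJ_def)
    then show ?thesis using cspanI[of "{s}" S "\<lambda>_. \<i>"] that by simp
  qed
  ultimately show "S \<union> JJ ` S \<subseteq> cspan S" by auto
qed

lemma JJ_span_invariant:
  assumes "JJ ` W \<subseteq> span W" shows "JJ ` span W \<subseteq> span (W::'a::complex_hilbert set)"
proof -
  have "JJ ` span W = span (JJ ` W)" by (rule span_linear_image[OF linear_JJ, symmetric])
  also have "\<dots> \<subseteq> span W" using assms by (simp add: span_minimal)
  finally show ?thesis .
qed

lemma JJ_span_sym: "JJ ` span (S \<union> JJ ` S) \<subseteq> span (S \<union> JJ ` (S::'a::complex_hilbert set))"
proof (rule JJ_span_invariant)
  have "JJ (JJ s) \<in> span (S \<union> JJ ` S)" if "s \<in> S" for s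
    using that by (simp add: span_neg span_base)
  then show "JJ ` (S \<union> JJ ` S) \<subseteq> span (S \<union> JJ ` S)" by (auto intro: span_base)
qed

lemma proj_JJ:
  fixes E :: "'a::complex_hilbert set"
  assumes "JJ ` E \<subseteq> E" "p \<in> E" "\<forall>w\<in>E. inner w (z - p) = 0"
  shows "JJ p \<in> E" "\<forall>w\<in>E. inner w (JJ z - JJ p) = 0"
proof -
  show "JJ p \<in> E" using assms by auto
  show "\<forall>w\<in>E. inner w (JJ z - JJ p) = 0"
  proof
    fix w assume "w \<in> E"
    then have "JJ w \<in> E" using assms by auto
    then have "inner (JJ w) (z - p) = 0" using assms by auto
    then show "inner w (JJ z - JJ p) = 0"
      by (metis JJ_JJ JJ_diff inner_JJ_left inner_minus_left neg_equal_0_iff_equal)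
  qed
qed

lemma cproj_exists:
  fixes V :: "'a::complex_hilbert set"
  assumes "finite V"
  defines "E \<equiv> span (V \<union> JJ ` V)"
  shows "\<exists>P. linear P \<and> (\<forall>z. P z \<in> E) \<and> (\<forall>z. \<forall>w\<in>E. inner w (z - P z) = 0)
            \<and> (\<forall>z. P (JJ z) = JJ (P z)) \<and> subspace E \<and> JJ ` E \<subseteq> E"
proof -
  obtain P where P: "linear P" "\<forall>z. P z \<in> E" "\<forall>z. \<forall>w\<in>E. inner w (z - P z) = 0"
    using proj_exists[of "V \<union> JJ ` V"] assms by auto
  have inv: "JJ ` E \<subseteq> E" unfolding E_def by (rule JJ_span_sym)
  have sub: "subspace E" unfolding E_def by simp
  have "P (JJ z) = JJ (P z)" for z
    using proj_unique[OF sub, of "P (JJ z)" "JJ z" "JJ (P z)"] P proj_JJ[OF inv, of "P z" z] by auto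
  then show ?thesis using P inv sub by blast
qed

lemma exists_unit_orth:
  fixes S :: "'a::complex_hilbert set"
  assumes infdim: "infinite_dimensional TYPE('a)" and fin: "finite S"
  shows "\<exists>w. norm w = 1 \<and> (\<forall>s\<in>S. inner s w = 0 \<and> inner (JJ s) w = 0)"
proof -
  define E where "E = span (S \<union> JJ ` S)"
  obtain P where P: "linear P" "\<forall>z. P z \<in> E" "\<forall>z. \<forall>w\<in>E. inner w (z - P z) = 0"
    using cproj_exists[OF fin] unfolding E_def by blast
  have "cspan S \<noteq> UNIV" using infdim fin unfolding infinite_dimensional_def by blast
  then have "E \<noteq> UNIV" using span_JJ_sub_cspan[of S] unfolding E_def by blast
  then obtain v where v: "v \<notin> E" by blast
  define w0 where "w0 = v - P v"
  have "w0 \<noteq> 0" using v P(2) unfolding w0_def by (metis eq_iff_diff_eq_0)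
  define w where "w = w0 /\<^sub>R norm w0"
  have "norm w = 1" using \<open>w0 \<noteq> 0\<close> by (simp add: w_def)
  moreover have "inner s w = 0" if "s \<in> E" for s
    using P(3) that by (simp add: w_def w0_def)
  moreover have "s \<in> E" "JJ s \<in> E" if "s \<in> S" for s
    using that by (auto simp: E_def intro: span_base)
  ultimately show ?thesis by blast
qed

definition orthC :: "'a::complex_hilbert \<Rightarrow> 'a \<Rightarrow> bool" where
  "orthC a b \<longleftrightarrow> inner a b = 0 \<and> inner (JJ a) b = 0"

lemma orthC_sym: "orthC a b \<Longrightarrow> orthC b a"
  unfolding orthC_def by (metis inner_JJ_left inner_commute neg_equal_0_iff_equal)

lemma orthC_JJ: "orthC a b \<Longrightarrow> inner a (JJ b) = 0 \<and> inner (JJ a) (JJ b) = 0 \<and> inner b a = 0 \<and> inner (JJ b) a = 0"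
  unfolding orthC_def by (metis inner_JJ_JJ inner_JJ_left inner_commute neg_equal_0_iff_equal)

lemma con_family_exists:
  fixes S :: "'a::complex_hilbert set"
  assumes infdim: "infinite_dimensional TYPE('a)" and fin: "finite S"
  shows "\<exists>w :: nat \<Rightarrow> 'a. \<forall>j<n. norm (w j) = 1 \<and> (\<forall>s\<in>S. orthC s (w j))
              \<and> (\<forall>k<n. k \<noteq> j \<longrightarrow> orthC (w k) (w j))"
proof (induction n)
  case 0 then show ?case by simp
next
  case (Suc n)
  then obtain w :: "nat \<Rightarrow> 'a" where w: "\<forall>j<n. norm (w j) = 1 \<and> (\<forall>s\<in>S. orthC s (w j))
              \<and> (\<forall>k<n. k \<noteq> j \<longrightarrow> orthC (w k) (w j))" by blast
  obtain v where v: "norm v = 1" "\<forall>s\<in>S \<union> w ` {..<n}. inner s v = 0 \<and> inner (JJ s) v = 0"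
    using exists_unit_orth[OF infdim, of "S \<union> w ` {..<n}"] fin by auto
  define w' where "w' = w(n := v)"
  have "\<forall>j<Suc n. norm (w' j) = 1 \<and> (\<forall>s\<in>S. orthC s (w' j))
              \<and> (\<forall>k<Suc n. k \<noteq> j \<longrightarrow> orthC (w' k) (w' j))"
  proof (intro allI impI conjI ballI)
    fix j assume j: "j < Suc n"
    show "norm (w' j) = 1" using w v j by (auto simp: w'_def less_Suc_eq)
    fix s assume "s \<in> S" then show "orthC s (w' j)" using w v j by (auto simp: w'_def less_Suc_eq orthC_def)
  next
    fix j k assume j: "j < Suc n" and k: "k < Suc n" "k \<noteq> j"
    show "orthC (w' k) (w' j)"
    proof (cases "j = n")
      case True then have "k < n" using k by auto
      then show ?thesis using True v by (auto simp: w'_def orthC_def)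
    next
      case False then have "j < n" using j by auto
      show ?thesis
      proof (cases "k = n")
        case True
        have "orthC (w j) v" using \<open>j < n\<close> v by (auto simp: orthC_def)
        then show ?thesis using True False by (auto simp: w'_def intro: orthC_sym)
      next
        case False2: False
        then show ?thesis using \<open>j < n\<close> k w False by (auto simp: w'_def)
      qed
    qed
  qed
  then show ?case by blast
qed

lemma perturb:
  fixes v :: "nat \<Rightarrow> 'a::complex_hilbert"
  assumes infdim: "infinite_dimensional TYPE('a)" and x: "x \<noteq> 0" and d: "\<delta> > 0"
  shows "\<exists>v'. (\<forall>i<m. norm (v' i - v i) = \<delta>) \<and> x \<notin> span (v' ` {..<m} \<union> JJ ` v' ` {..<m})"
proof -
  obtain z :: "nat \<Rightarrow> 'a" where z: "\<forall>j<m. norm (z j) = 1 \<and> (\<forall>s\<in>insert x (v ` {..<m}). orthC s (z j))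
              \<and> (\<forall>k<m. k \<noteq> j \<longrightarrow> orthC (z k) (z j))"
    using con_family_exists[OF infdim, of "insert x (v ` {..<m})" m] by auto
  define v' where "v' i = v i + \<delta> *\<^sub>R z i" for i
  have dist: "\<forall>i<m. norm (v' i - v i) = \<delta>" using z d by (auto simp: v'_def)
  define rec where "rec u = (\<Sum>k<m. (inner (z k) u / \<delta>) *\<^sub>R v' k + (inner (JJ (z k)) u / \<delta>) *\<^sub>R JJ (v' k))" for u
  have i1: "inner (z k) (v' i) = (if k = i then \<delta> else 0)" 
   and i2: "inner (JJ (z k)) (v' i) = 0" if "k < m" "i < m" for k i
  proof -
    have o1: "orthC (v i) (z k)" using z that by auto
    have "inner (z k) (v i) = 0" "inner (JJ (z k)) (v i) = 0" using orthC_JJ[OF o1] by auto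
    moreover have "inner (z k) (z i) = (if k = i then 1 else 0)"
      using z that by (auto simp: orthC_def dot_square_norm power2_eq_1_iff[symmetric])
    moreover have "inner (JJ (z k)) (z i) = 0"
      using z that by (cases "k = i") (auto simp: orthC_def)
    ultimately show "inner (z k) (v' i) = (if k = i then \<delta> else 0)" "inner (JJ (z k)) (v' i) = 0"
      by (auto simp: v'_def inner_add_right)
  qed
  have i3: "inner (z k) (JJ (v' i)) = 0" and i4: "inner (JJ (z k)) (JJ (v' i)) = (if k = i then \<delta> else 0)"
    if "k < m" "i < m" for k i
  proof -
    have "inner (z k) (JJ (v' i)) = - inner (JJ (z k)) (v' i)" by (simp add: inner_JJ_left)
    then show "inner (z k) (JJ (v' i)) = 0" using i2[OF that] by simp
    show "inner (JJ (z k)) (JJ (v' i)) = (if k = i then \<delta> else 0)" using i1[OF that] by simp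
  qed
  have radd: "rec (a + b) = rec a + rec b" for a b
    by (simp add: rec_def inner_add_right add_divide_distrib scaleR_add_left sum.distrib algebra_simps)
  have rsc: "rec (c *\<^sub>R a) = c *\<^sub>R rec a" for a c
    by (simp add: rec_def scaleR_sum_right scaleR_add_right)
  have r0: "rec 0 = 0" by (simp add: rec_def)
  have sub: "subspace {u. u = rec u}"
    by (rule subspaceI) (auto simp: radd rsc r0)
  have base: "u = rec u" if "u \<in> v' ` {..<m} \<union> JJ ` v' ` {..<m}" for u
  proof -
    from that obtain i where i: "i < m" and u: "u = v' i \<or> u = JJ (v' i)" by auto
    show ?thesis
    proof (cases "u = v' i")
      case True
      have "rec u = (\<Sum>k<m. (if k = i then v' k else 0))"
        unfolding rec_def True by (rule sum.cong) (use i1 i2 i d in auto)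
      then show ?thesis using i True by simp
    next
      case False then have uu: "u = JJ (v' i)" using u by auto
      have "rec u = (\<Sum>k<m. (if k = i then JJ (v' k) else 0))"
        unfolding rec_def uu by (rule sum.cong) (use i3 i4 i d in auto)
      then show ?thesis using i uu by simp
    qed
  qed
  have "x \<notin> span (v' ` {..<m} \<union> JJ ` v' ` {..<m})"
  proof
    assume "x \<in> span (v' ` {..<m} \<union> JJ ` v' ` {..<m})"
    then have "x = rec x" by (rule span_induct[OF _ sub]) (use base in auto)
    moreover have "inner (z k) x = 0 \<and> inner (JJ (z k)) x = 0" if "k < m" for k
      using z that orthC_JJ[of x "z k"] by auto
    ultimately have "x = 0" by (simp add: rec_def)
    then show False using x by simp
  qed
  then show ?thesis using dist by blast
qed

lemma orthonormal_sum_norm2: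
  fixes b :: "'i \<Rightarrow> 'a::real_inner"
  assumes fin: "finite I" and on: "\<And>i. i \<in> I \<Longrightarrow> norm (b i) = 1"
    and orth: "\<And>i k. i \<in> I \<Longrightarrow> k \<in> I \<Longrightarrow> i \<noteq> k \<Longrightarrow> inner (b i) (b k) = 0"
  shows "(norm (\<Sum>i\<in>I. t i *\<^sub>R b i))\<^sup>2 = (\<Sum>i\<in>I. (t i)\<^sup>2)"
proof -
  have "(norm (\<Sum>i\<in>I. t i *\<^sub>R b i))\<^sup>2 = (\<Sum>i\<in>I. \<Sum>k\<in>I. t i * t k * inner (b i) (b k))"
    by (simp add: power2_norm_eq_inner inner_sum_left inner_sum_right sum_distrib_left mult.assoc inner_commute mult.left_commute)
  also have "\<dots> = (\<Sum>i\<in>I. \<Sum>k\<in>I. if k = i then (t i)\<^sup>2 else 0)"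
    by (intro sum.cong refl) (auto simp: orth on dot_square_norm power2_eq_square)
  also have "\<dots> = (\<Sum>i\<in>I. (t i)\<^sup>2)" using fin by simp
  finally show ?thesis .
qed

lemma orthonormal_bessel:
  fixes b :: "'i \<Rightarrow> 'a::real_inner"
  assumes fin: "finite I" and on: "\<And>i. i \<in> I \<Longrightarrow> norm (b i) = 1"
    and orth: "\<And>i k. i \<in> I \<Longrightarrow> k \<in> I \<Longrightarrow> i \<noteq> k \<Longrightarrow> inner (b i) (b k) = 0"
  shows "(\<Sum>i\<in>I. (inner (b i) q)\<^sup>2) \<le> (norm q)\<^sup>2"
proof -
  define s where "s = (\<Sum>i\<in>I. inner (b i) q *\<^sub>R b i)"
  have ns: "(norm s)\<^sup>2 = (\<Sum>i\<in>I. (inner (b i) q)\<^sup>2)"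
    unfolding s_def by (rule orthonormal_sum_norm2[OF assms])
  have iqs: "inner q s = (\<Sum>i\<in>I. (inner (b i) q)\<^sup>2)"
    by (simp add: s_def inner_sum_right power2_eq_square inner_commute)
  have "0 \<le> (norm (q - s))\<^sup>2" by simp
  also have "\<dots> = (norm q)\<^sup>2 - 2 * inner q s + (norm s)\<^sup>2"
    by (simp add: power2_norm_eq_inner inner_diff inner_commute)
  finally show ?thesis using ns iqs by simp
qed

definition R1 :: "'a::complex_hilbert \<Rightarrow> 'a \<Rightarrow> 'a \<Rightarrow> 'a" where
  "R1 f g z = inner f z *\<^sub>R g + inner (JJ f) z *\<^sub>R JJ g"

lemma R1_JJ: "R1 f g (JJ z) = JJ (R1 f g z)"
  by (simp add: R1_def JJ_add JJ_diff JJ_scaleR inner_JJ_left algebra_simps)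

lemma bounded_linear_R1: "bounded_linear (R1 f g)"
  unfolding R1_def by (intro bounded_linear_add bounded_linear_compose[OF bounded_linear_scaleR_left bounded_linear_inner_right])

lemma norm_R1: "(norm (R1 f g z))\<^sup>2 = ((inner f z)\<^sup>2 + (inner (JJ f) z)\<^sup>2) * (norm g)\<^sup>2"
proof -
  have "(norm (R1 f g z))\<^sup>2 = inner (R1 f g z) (R1 f g z)" by (rule power2_norm_eq_inner)
  also have "\<dots> = ((inner f z)\<^sup>2 + (inner (JJ f) z)\<^sup>2) * inner g g"
    by (simp add: R1_def inner_add_left inner_add_right power2_eq_square algebra_simps inner_commute[of "JJ g" g])
  finally show ?thesis by (simp add: power2_norm_eq_inner)
qed

lemma chain_op:
  fixes P T :: "'a::complex_hilbert \<Rightarrow> 'a" and E :: "'a set" and w :: "nat \<Rightarrow> 'a"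
  assumes sub: "subspace E" and JE: "JJ ` E \<subseteq> E"
    and Plin: "linear P" and PE: "\<And>z. P z \<in> E" and Porth: "\<And>z w. w \<in> E \<Longrightarrow> inner w (z - P z) = 0"
    and PJ: "\<And>z. P (JJ z) = JJ (P z)"
    and Tbl: "bounded_linear T" and TJ: "\<And>z. T (JJ z) = JJ (T z)" and Tn: "\<And>z. norm (T z) \<le> R * norm z"
    and R: "R > 0" and c: "0 < c" "c \<le> 1"
    and wn: "\<And>j. j \<le> N \<Longrightarrow> norm (w j) = 1"
    and wo: "\<And>j k. j \<le> N \<Longrightarrow> k \<le> N \<Longrightarrow> j \<noteq> k \<Longrightarrow> orthC (w j) (w k)"
    and wE: "\<And>j e. j \<le> N \<Longrightarrow> e \<in> E \<Longrightarrow> orthC e (w j)"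
    and yE: "yh \<in> E" and yn: "norm yh = 1"
  defines "\<kappa> \<equiv> R * sqrt (1 - c\<^sup>2)"
  defines "A \<equiv> (\<lambda>z. c *\<^sub>R P (T (P z)))"
  defines "S \<equiv> (\<lambda>z. A z + R *\<^sub>R (\<Sum>j<N. R1 (w j) (w (Suc j)) z) + \<kappa> *\<^sub>R R1 (w N) yh z)"
  shows "bounded_linear S" "\<And>z. S (JJ z) = JJ (S z)" "\<And>z. norm (S z) \<le> R * norm z"
    "\<And>e. e \<in> E \<Longrightarrow> S e = A e" "\<And>z. A z \<in> E" "\<And>z. norm (A z) \<le> c * R * norm z"
    "\<And>j. j < N \<Longrightarrow> S (w j) = R *\<^sub>R w (Suc j)" "S (w N) = \<kappa> *\<^sub>R yh"
proof -
  have Pnorm: "norm (P z) \<le> norm z" for z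
  proof (rule proj_le[of "P z" E z])
    show "P z \<in> E" by (rule PE)
    show "\<forall>w\<in>E. inner w (z - P z) = 0" using Porth by blast
  qed
  have Pbl: "bounded_linear P"
    by (rule bounded_linear_intro[where K=1]) (auto simp: linear_add[OF Plin] linear_scale[OF Plin] Pnorm)
  have Abl: "bounded_linear A" unfolding A_def
    by (intro bounded_linear_compose[OF bounded_linear_scaleR_right] bounded_linear_compose[OF Pbl]
          bounded_linear_compose[OF Tbl] Pbl)
  show "bounded_linear S" unfolding S_def
    by (intro bounded_linear_add Abl bounded_linear_compose[OF bounded_linear_scaleR_right]
        bounded_linear_sum bounded_linear_R1)
  show "\<And>z. S (JJ z) = JJ (S z)"
    by (simp add: S_def A_def PJ TJ R1_JJ JJ_add JJ_scaleR JJ_sum)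
  show AE: "\<And>z. A z \<in> E" unfolding A_def using PE sub by (simp add: subspace_scale)
  show An: "norm (A z) \<le> c * R * norm z" for z
  proof -
    have "norm (A z) = c * norm (P (T (P z)))" using c by (simp add: A_def)
    also have "\<dots> \<le> c * norm (T (P z))" using c Pnorm by (simp add: mult_left_mono)
    also have "\<dots> \<le> c * (R * norm (P z))" using c Tn by (simp add: mult_left_mono)
    also have "\<dots> \<le> c * (R * norm z)" using c R Pnorm by (simp add: mult_left_mono)
    finally show ?thesis by simp
  qed
  have R1E: "R1 (w j) g e = 0" if "j \<le> N" "e \<in> E" for j g e
    using wE[OF that] orthC_JJ[of e "w j"] by (simp add: R1_def orthC_def)
  have PE0: "e \<in> E \<Longrightarrow> P e = e" for e using proj_fix[OF sub, of "P e" e] PE Porth by auto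
  show SE: "\<And>e. e \<in> E \<Longrightarrow> S e = A e"
    by (simp add: S_def R1E)
  have Pw: "P (w j) = 0" if "j \<le> N" for j
  proof -
    have "\<forall>e\<in>E. inner e (w j - 0) = 0" using wE[OF that] by (simp add: orthC_def)
    moreover have "\<forall>e\<in>E. inner e (w j - P (w j)) = 0" using Porth by blast
    moreover have "0 \<in> E" using sub by (rule subspace_0)
    ultimately show ?thesis using proj_unique[OF sub, of "P (w j)" "w j" 0] PE by blast
  qed
  have Aw: "A (w j) = 0" if "j \<le> N" for j
    using Pw[OF that] Tbl Pbl by (simp add: A_def linear_simps bounded_linear.linear)
  have R1w: "R1 (w k) g (w j) = (if k = j then g else 0)" if "j \<le> N" "k \<le> N" for j k g
  proof (cases "k = j")
    case True
    have "inner (w j) (w j) = 1" using wn[OF that(1)] by (simp add: dot_square_norm)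
    then show ?thesis using True by (simp add: R1_def)
  next
    case False
    then show ?thesis using wo[OF that(2,1) False] by (simp add: R1_def orthC_def)
  qed
  show "S (w j) = R *\<^sub>R w (Suc j)" if "j < N" for j
  proof -
    have "(\<Sum>k<N. R1 (w k) (w (Suc k)) (w j)) = (\<Sum>k<N. if k = j then w (Suc k) else 0)"
      by (rule sum.cong) (use that R1w in auto)
    also have "\<dots> = w (Suc j)" using that by simp
    finally show ?thesis using that by (simp add: S_def Aw R1w)
  qed
  show "S (w N) = \<kappa> *\<^sub>R yh"
  proof -
    have "(\<Sum>k<N. R1 (w k) (w (Suc k)) (w N)) = 0"
      by (rule sum.neutral) (use R1w in auto)
    then show ?thesis by (simp add: S_def Aw R1w)
  qed
  show "norm (S z) \<le> R * norm z" for z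
  proof -
    define p where "p = P z"
    define \<alpha> where "\<alpha> j = inner (w j) z" for j
    define \<beta> where "\<beta> j = inner (JJ (w j)) z" for j
    define X where "X = A z + \<kappa> *\<^sub>R R1 (w N) yh z"
    define Y where "Y = R *\<^sub>R (\<Sum>j<N. R1 (w j) (w (Suc j)) z)"
    have SXY: "S z = X + Y" by (simp add: S_def X_def Y_def)
    have XE: "X \<in> E"
    proof -
      have "R1 (w N) yh z \<in> E" unfolding R1_def
        using yE JE sub by (auto intro!: subspace_add subspace_scale)
      then show ?thesis unfolding X_def using AE sub by (auto intro!: subspace_add subspace_scale)
    qed
    define b where "b = (\<lambda>(j::nat, t::bool). if t then JJ (w j) else w j)"
    have bn: "norm (b i) = 1" if "i \<in> {..N} \<times> UNIV" for i
      using that wn by (auto simp: b_def split: prod.splits)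
    have bo: "inner (b i) (b k) = 0" if hi: "i \<in> {..N} \<times> UNIV" and hk: "k \<in> {..N} \<times> UNIV" and hne: "i \<noteq> k" for i k
    proof -
      obtain j s where i: "i = (j, s)" "j \<le> N" using hi by auto
      obtain l t where k: "k = (l, t)" "l \<le> N" using hk by auto
      show ?thesis
      proof (cases "j = l")
        case True
        then have "s \<noteq> t" using hne i k by auto
        then show ?thesis using i k True by (cases s; cases t) (auto simp: b_def)
      next
        case False
        have o: "orthC (w j) (w l)" using wo i k False by auto
        show ?thesis using orthC_JJ[OF o] o i k by (cases s; cases t) (auto simp: b_def orthC_def)
      qed
    qed
    have bE: "inner (b i) e = 0" if hi: "i \<in> {..N} \<times> UNIV" and he: "e \<in> E" for i e
    proof -
      obtain j s where i: "i = (j, s)" "j \<le> N" using hi by auto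
      have o: "orthC e (w j)" using wE i he by auto
      show ?thesis using orthC_JJ[OF o] o i by (cases s) (auto simp: b_def orthC_def inner_commute)
    qed
    have sumb: "(\<Sum>i\<in>{..n} \<times> UNIV. f i) = (\<Sum>j\<le>n. f (j, False) + f (j, True))" for f :: "nat \<times> bool \<Rightarrow> real" and n
    proof -
      have "(\<Sum>j\<le>n. \<Sum>t\<in>UNIV. f (j, t)) = (\<Sum>(j, t)\<in>{..n} \<times> UNIV. f (j, t))" by (rule sum.cartesian_product)
      then show ?thesis by (simp add: UNIV_bool add.commute)
    qed
    have sumb': "(\<Sum>i\<in>{..<n} \<times> UNIV. f i) = (\<Sum>j<n. f (j, False) + f (j, True))" for f :: "nat \<times> bool \<Rightarrow> real" and n
    proof -
      have "(\<Sum>j<n. \<Sum>t\<in>UNIV. f (j, t)) = (\<Sum>(j, t)\<in>{..<n} \<times> UNIV. f (j, t))" by (rule sum.cartesian_product)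
      then show ?thesis by (simp add: UNIV_bool add.commute)
    qed
    have q_inner: "inner (b i) (z - p) = inner (b i) z" if "i \<in> {..N} \<times> UNIV" for i
      using bE[OF that, of p] PE by (simp add: p_def inner_diff_right)
    have bess: "(\<Sum>j\<le>N. (\<alpha> j)\<^sup>2 + (\<beta> j)\<^sup>2) \<le> (norm (z - p))\<^sup>2"
    proof -
      have "(\<Sum>i\<in>{..N} \<times> UNIV. (inner (b i) (z - p))\<^sup>2) \<le> (norm (z - p))\<^sup>2"
        by (rule orthonormal_bessel) (use bn bo in auto)
      also have "(\<Sum>i\<in>{..N} \<times> UNIV. (inner (b i) (z - p))\<^sup>2) = (\<Sum>i\<in>{..N} \<times> UNIV. (inner (b i) z)\<^sup>2)"
        by (rule sum.cong) (auto simp: q_inner)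
      also have "\<dots> = (\<Sum>j\<le>N. (\<alpha> j)\<^sup>2 + (\<beta> j)\<^sup>2)"
        by (simp add: sumb b_def \<alpha>_def \<beta>_def add.commute)
      finally show ?thesis by simp
    qed
    have pyth: "(norm z)\<^sup>2 = (norm p)\<^sup>2 + (norm (z - p))\<^sup>2"
      using proj_pyth[of p E z] PE Porth by (auto simp: p_def)
    have Yexp: "Y = (\<Sum>i\<in>{..<N} \<times> UNIV. (R * (if snd i then \<beta> (fst i) else \<alpha> (fst i))) *\<^sub>R b (Suc (fst i), snd i))"
    proof -
      have "(\<Sum>i\<in>{..<N} \<times> UNIV. (R * (if snd i then \<beta> (fst i) else \<alpha> (fst i))) *\<^sub>R b (Suc (fst i), snd i))
          = (\<Sum>j<N. \<Sum>t\<in>UNIV. (R * (if t then \<beta> j else \<alpha> j)) *\<^sub>R b (Suc j, t))"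
        by (simp add: sum.cartesian_product split_def)
      also have "\<dots> = (\<Sum>j<N. R *\<^sub>R R1 (w j) (w (Suc j)) z)"
        by (simp add: UNIV_bool b_def R1_def \<alpha>_def \<beta>_def scaleR_add_right)
      finally show ?thesis by (simp add: Y_def scaleR_sum_right)
    qed
    have Yn: "(norm Y)\<^sup>2 = R\<^sup>2 * (\<Sum>j<N. (\<alpha> j)\<^sup>2 + (\<beta> j)\<^sup>2)"
    proof -
      have "(norm Y)\<^sup>2 = (\<Sum>i\<in>{..<N} \<times> UNIV. (R * (if snd i then \<beta> (fst i) else \<alpha> (fst i)))\<^sup>2)"
        unfolding Yexp
      proof (rule orthonormal_sum_norm2)
        fix i k assume "i \<in> {..<N} \<times> (UNIV::bool set)" "k \<in> {..<N} \<times> (UNIV::bool set)" "i \<noteq> k"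
        then show "inner (b (Suc (fst i), snd i)) (b (Suc (fst k), snd k)) = 0"
          by (intro bo) (auto simp: prod_eq_iff)
      qed (use bn in auto)
      also have "\<dots> = R\<^sup>2 * (\<Sum>j<N. (\<alpha> j)\<^sup>2 + (\<beta> j)\<^sup>2)"
        by (simp add: sumb' power_mult_distrib sum_distrib_left algebra_simps)
      finally show ?thesis .
    qed
    have YE: "inner X Y = 0"
    proof -
      have "inner X (b (Suc (fst i), snd i)) = 0" if "i \<in> {..<N} \<times> UNIV" for i
        using bE[of "(Suc (fst i), snd i)" X] XE that by (auto simp: inner_commute)
      then show ?thesis unfolding Yexp by (simp add: inner_sum_right)
    qed
    have Xn: "norm X \<le> c * R * norm p + \<kappa> * sqrt ((\<alpha> N)\<^sup>2 + (\<beta> N)\<^sup>2)"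
    proof -
      have "norm (A z) \<le> c * R * norm p"
      proof -
        have "A z = A p" using PE0[OF PE[of z]] by (simp add: A_def p_def)
        then show ?thesis using An[of p] by simp
      qed
      moreover have "norm (R1 (w N) yh z) = sqrt ((\<alpha> N)\<^sup>2 + (\<beta> N)\<^sup>2)"
        using norm_R1[of "w N" yh z] yn by (simp add: \<alpha>_def \<beta>_def real_sqrt_unique)
      moreover have "\<kappa> \<ge> 0" using R c by (simp add: \<kappa>_def power_le_one)
      ultimately show ?thesis unfolding X_def
        by (smt (verit, best) norm_scaleR norm_triangle_ineq abs_of_nonneg)
    qed
    have kap: "\<kappa>\<^sup>2 = R\<^sup>2 * (1 - c\<^sup>2)" using c by (simp add: \<kappa>_def power_mult_distrib power_le_one)
    have Xn2: "(norm X)\<^sup>2 \<le> R\<^sup>2 * ((norm p)\<^sup>2 + (\<alpha> N)\<^sup>2 + (\<beta> N)\<^sup>2)"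
    proof -
      define u where "u = norm p"
      define v where "v = sqrt ((\<alpha> N)\<^sup>2 + (\<beta> N)\<^sup>2)"
      have v2: "v\<^sup>2 = (\<alpha> N)\<^sup>2 + (\<beta> N)\<^sup>2" by (simp add: v_def)
      have "(norm X)\<^sup>2 \<le> (c * R * u + \<kappa> * v)\<^sup>2"
        using Xn by (simp add: u_def v_def power_mono)
      also have "\<dots> \<le> ((c * R)\<^sup>2 + \<kappa>\<^sup>2) * (u\<^sup>2 + v\<^sup>2)"
      proof -
        have "0 \<le> (c * R * v - \<kappa> * u)\<^sup>2" by simp
        then show ?thesis by (simp add: power2_eq_square algebra_simps)
      qed
      also have "((c * R)\<^sup>2 + \<kappa>\<^sup>2) = R\<^sup>2" by (simp add: kap power_mult_distrib algebra_simps)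
      finally show ?thesis by (simp add: u_def v2 add.assoc)
    qed
    have "(norm (S z))\<^sup>2 = (norm X)\<^sup>2 + (norm Y)\<^sup>2"
    proof -
      have "(norm (X + Y))\<^sup>2 = inner (X + Y) (X + Y)" by (rule power2_norm_eq_inner)
      also have "\<dots> = inner X X + inner Y Y + 2 * inner X Y"
        by (simp add: inner_add_left inner_add_right inner_commute[of Y X])
      finally show ?thesis using YE by (simp add: SXY power2_norm_eq_inner)
    qed
    also have "\<dots> \<le> R\<^sup>2 * ((norm p)\<^sup>2 + (\<alpha> N)\<^sup>2 + (\<beta> N)\<^sup>2) + R\<^sup>2 * (\<Sum>j<N. (\<alpha> j)\<^sup>2 + (\<beta> j)\<^sup>2)"
      using Xn2 Yn by linarith
    also have "\<dots> = R\<^sup>2 * ((norm p)\<^sup>2 + (\<Sum>j\<le>N. (\<alpha> j)\<^sup>2 + (\<beta> j)\<^sup>2))"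
    proof -
      have eq: "(\<Sum>j\<le>N. (\<alpha> j)\<^sup>2 + (\<beta> j)\<^sup>2) = (\<Sum>j<N. (\<alpha> j)\<^sup>2 + (\<beta> j)\<^sup>2) + ((\<alpha> N)\<^sup>2 + (\<beta> N)\<^sup>2)"
        using sum.lessThan_Suc[of "\<lambda>j. (\<alpha> j)\<^sup>2 + (\<beta> j)\<^sup>2" N] by (simp only: lessThan_Suc_atMost)
      show ?thesis unfolding eq by (simp only: distrib_left add.assoc add.left_commute)
    qed
    also have "\<dots> \<le> R\<^sup>2 * (norm z)\<^sup>2"
    proof -
      have "(norm p)\<^sup>2 + (\<Sum>j\<le>N. (\<alpha> j)\<^sup>2 + (\<beta> j)\<^sup>2) \<le> (norm z)\<^sup>2" using bess pyth by linarith
      then show ?thesis by (rule mult_left_mono) simp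
    qed
    finally have "(norm (S z))\<^sup>2 \<le> (R * norm z)\<^sup>2" by (simp only: power_mult_distrib)
    then show ?thesis by (rule power2_le_imp_le) (use R in simp)
  qed
qed

lemma orthC_scaleR_left: "orthC a b \<Longrightarrow> orthC (t *\<^sub>R a) b"
  by (simp add: orthC_def JJ_scaleR)

lemma orthC_span:
  assumes "\<forall>s\<in>V. orthC s w"
  shows "\<forall>e\<in>span (V \<union> JJ ` V). orthC e (w::'a::complex_hilbert)"
proof
  fix e assume "e \<in> span (V \<union> JJ ` V)"
  then show "orthC e w"
  proof (rule span_induct)
    show "subspace {e. orthC e w}"
      by (rule subspaceI) (auto simp: orthC_def JJ_add JJ_scaleR inner_add_left)
    fix s assume "s \<in> V \<union> JJ ` V"
    then show "orthC s w" using assms by (auto simp: orthC_def)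
  qed
qed

lemma funpow_norm_bound:
  fixes A :: "'a::real_normed_vector \<Rightarrow> 'a"
  assumes "\<And>z. norm (A z) \<le> K * norm z" "K \<ge> 0"
  shows "norm ((A ^^ n) z) \<le> K ^ n * norm z"
proof (induction n)
  case 0 then show ?case by simp
next
  case (Suc n)
  have "norm ((A ^^ Suc n) z) \<le> K * norm ((A ^^ n) z)" using assms(1) by simp
  also have "\<dots> \<le> K * (K ^ n * norm z)" using Suc assms(2) by (simp add: mult_left_mono)
  finally show ?case by (simp add: mult.assoc)
qed

lemma funpow_in:
  assumes "\<And>z. z \<in> E \<Longrightarrow> A z \<in> E" "z \<in> E" shows "(A ^^ n) z \<in> E"
  by (induction n) (use assms in auto)

lemma norm4: "norm (a + b + c + d) \<le> norm a + norm b + norm c + norm (d::'a::real_normed_vector)"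
proof -
  have "norm (a + b + c + d) \<le> norm (a + b + c) + norm d" by (rule norm_triangle_ineq)
  also have "norm (a + b + c) \<le> norm (a + b) + norm c" by (rule norm_triangle_ineq)
  also have "norm (a + b) \<le> norm a + norm b" by (rule norm_triangle_ineq)
  finally show ?thesis by simp
qed

lemma density_step:
  fixes T :: "'a::complex_hilbert \<Rightarrow>\<^sub>L 'a" and e :: "nat \<Rightarrow> 'a"
  assumes infdim: "infinite_dimensional TYPE('a)"
    and Tc: "clinear_op T" and TR: "norm T \<le> R" and R: "R > 0"
    and x: "x \<noteq> 0" and r: "r > 0" and eps: "eps > 0"
  shows "\<exists>S. clinear_op S \<and> norm S \<le> R \<and> (\<forall>i<m. norm (blinfun_apply S (e i) - blinfun_apply T (e i)) < eps)
           \<and> (\<exists>n a. dist (scaleC a ((blinfun_apply S ^^ n) x)) y < r)"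
proof (cases "norm y < r")
  case True
  have "dist (scaleC 0 ((blinfun_apply T ^^ 0) x)) y < r" using True by (simp add: dist_norm)
  then have "\<exists>n a. dist (scaleC a ((blinfun_apply T ^^ n) x)) y < r" by blast
  then show ?thesis using Tc TR eps by (intro exI[of _ T]) auto
next
  case False
  then have yr: "norm y \<ge> r" by simp
  define M where "M = (\<Sum>i<m. norm (e i)) + 1"
  have eM: "norm (e i) + 1 \<le> M" if "i < m" for i
  proof -
    have "norm (e i) \<le> (\<Sum>i<m. norm (e i))"
      by (rule member_le_sum) (use that in auto)
    then show ?thesis by (simp add: M_def)
  qed
  have M0: "M \<ge> 1" by (simp add: M_def sum_nonneg)
  define c where "c = max (1/2) (1 - eps / (4 * R * M))"
  have c0: "0 < c" "c < 1" using eps R M0 by (auto simp: c_def)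
  have c1: "(1 - c) * R * M \<le> eps / 4"
  proof -
    have "1 - c \<le> eps / (4 * R * M)" by (simp add: c_def)
    then have "(1 - c) * (R * M) \<le> eps / (4 * R * M) * (R * M)"
      using R M0 by (intro mult_right_mono) auto
    also have "\<dots> = eps / 4" using R M0 by (simp add: field_simps)
    finally show ?thesis by (simp add: mult.assoc)
  qed
  define \<delta> where "\<delta> = min 1 (min (r/2) (eps / (2 * (3 * R + 1))))"
  have d0: "\<delta> > 0" "\<delta> \<le> 1" "\<delta> \<le> r/2"
  proof -
    show "\<delta> > 0" using r eps R by (simp add: \<delta>_def)
    show "\<delta> \<le> 1" by (simp add: \<delta>_def)
    have "min (r/2) (eps / (2 * (3 * R + 1))) \<le> r/2" by (rule min.cobounded1)
    then show "\<delta> \<le> r/2" unfolding \<delta>_def by linarith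
  qed
  have d1: "(3 * R + 1) * \<delta> \<le> eps / 2"
  proof -
    have "\<delta> \<le> eps / (2 * (3 * R + 1))" by (simp add: \<delta>_def)
    then have "(3 * R + 1) * \<delta> \<le> (3 * R + 1) * (eps / (2 * (3 * R + 1)))"
      using R by (intro mult_left_mono) auto
    also have "\<dots> = eps / 2" using R by (simp add: field_simps)
    finally show ?thesis .
  qed
  define v where "v i = (if i < m then e i else if i < 2 * m then blinfun_apply T (e (i - m)) else y)" for i
  obtain v' where v': "\<forall>i<2*m+1. norm (v' i - v i) = \<delta>"
    and xnot: "x \<notin> span (v' ` {..<2*m+1} \<union> JJ ` v' ` {..<2*m+1})"
    using perturb[OF infdim x d0(1), of "2*m+1" v] by blast
  define V where "V = v' ` {..<2*m+1}"
  define E where "E = span (V \<union> JJ ` V)"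
  obtain P where P: "linear P" "\<And>z. P z \<in> E" "\<And>z w. w \<in> E \<Longrightarrow> inner w (z - P z) = 0"
      "\<And>z. P (JJ z) = JJ (P z)" "subspace E" "JJ ` E \<subseteq> E"
    using cproj_exists[of V] unfolding E_def[symmetric] by (auto simp: V_def)
  have VE: "v' i \<in> E" if "i < 2*m+1" for i using that by (auto simp: E_def V_def intro: span_base)
  have xE: "x \<notin> E" using xnot by (simp add: E_def V_def)
  define xp where "xp = x - P x"
  have xp0: "xp \<noteq> 0" using xE P(2) by (metis eq_iff_diff_eq_0 xp_def)
  define y' where "y' = v' (2*m)"
  have yy: "norm (y' - y) = \<delta>" using v'[rule_format, of "2*m"] by (simp add: y'_def v_def)
  have ny': "norm y' \<ge> r/2"
  proof -
    have "norm y - norm y' \<le> norm (y - y')" by (rule norm_triangle_ineq2)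
    then show ?thesis using yy yr d0 by (simp add: norm_minus_commute)
  qed
  have y'0: "norm y' > 0" using ny' r by linarith
  define yh where "yh = y' /\<^sub>R norm y'"
  have yhE: "yh \<in> E" using VE[of "2*m"] P(5) by (simp add: yh_def y'_def subspace_scale)
  have yhn: "norm yh = 1" using y'0 by (simp add: yh_def)
  define \<kappa> where "\<kappa> = R * sqrt (1 - c\<^sup>2)"
  have k0: "\<kappa> > 0" using R c0 by (simp add: \<kappa>_def power_less_one_iff abs_less_iff)
  define bnd where "bnd = r * norm xp * \<kappa> / (2 * norm y' * R * norm x)"
  have bnd0: "bnd > 0" using r xp0 k0 y'0 R x by (simp add: bnd_def)
  obtain N where N: "c ^ N < bnd" using real_arch_pow_inv[OF bnd0 c0(2)] by blast
  obtain u :: "nat \<Rightarrow> 'a" where u: "\<forall>j<N. norm (u j) = 1 \<and> (\<forall>s\<in>insert xp V. orthC s (u j))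
              \<and> (\<forall>k<N. k \<noteq> j \<longrightarrow> orthC (u k) (u j))"
    using con_family_exists[OF infdim, of "insert xp V" N] by (auto simp: V_def)
  define w where "w j = (if j = 0 then xp /\<^sub>R norm xp else u (j - 1))" for j
  have xpE: "orthC e xp" if "e \<in> E" for e
  proof -
    have "inner e xp = 0" using P(3)[OF that] by (simp add: xp_def)
    moreover have "inner (JJ e) xp = 0" using P(3)[of "JJ e" x] P(6) that by (auto simp: xp_def)
    ultimately show ?thesis by (simp add: orthC_def)
  qed
  have wn: "norm (w j) = 1" if "j \<le> N" for j
    using that u xp0 by (cases "j = 0") (auto simp: w_def)
  have uE: "orthC e (u j)" if "e \<in> E" "j < N" for e j
  proof -
    have "\<forall>s\<in>V. orthC s (u j)" using u that by auto
    from orthC_span[OF this] show ?thesis using that by (auto simp: E_def)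
  qed
  have wE: "orthC e (w j)" if "j \<le> N" "e \<in> E" for j e
  proof (cases "j = 0")
    case True
    have "orthC (inverse (norm xp) *\<^sub>R xp) e" by (rule orthC_scaleR_left, rule orthC_sym, rule xpE[OF that(2)])
    then show ?thesis using True by (simp add: w_def orthC_sym)
  next
    case False then show ?thesis using uE[OF that(2), of "j - 1"] that by (simp add: w_def)
  qed
  have wo: "orthC (w j) (w k)" if "j \<le> N" "k \<le> N" "j \<noteq> k" for j k
  proof -
    have o0: "orthC (w 0) (u l)" if "l < N" for l
    proof -
      have "orthC xp (u l)" using u that by auto
      then show ?thesis by (simp add: w_def orthC_scaleR_left)
    qed
    show ?thesis
    proof (cases "j = 0")
      case True then show ?thesis using o0[of "k - 1"] that by (simp add: w_def)
    next
      case False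
      show ?thesis
      proof (cases "k = 0")
        case True then show ?thesis using o0[of "j - 1"] that False by (auto simp: w_def intro: orthC_sym)
      next
        case False2: False
        then show ?thesis using u that False by (auto simp: w_def)
      qed
    qed
  qed
  have Tbl: "bounded_linear (blinfun_apply T)" by (rule blinfun.bounded_linear_right)
  have TJ: "\<And>z. blinfun_apply T (JJ z) = JJ (blinfun_apply T z)" using Tc by (simp add: clinear_op_iff)
  have Tn: "norm (blinfun_apply T z) \<le> R * norm z" for z
  proof -
    have "norm (blinfun_apply T z) \<le> norm T * norm z" by (rule norm_blinfun)
    also have "\<dots> \<le> R * norm z" by (rule mult_right_mono[OF TR norm_ge_zero])
    finally show ?thesis .
  qed
  define A where "A = (\<lambda>z. c *\<^sub>R P (blinfun_apply T (P z)))"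
  define S where "S = (\<lambda>z. A z + R *\<^sub>R (\<Sum>j<N. R1 (w j) (w (Suc j)) z) + \<kappa> *\<^sub>R R1 (w N) yh z)"
  note hyps = P(5) P(6) P(1) P(2) P(3) P(4) Tbl TJ Tn R c0(1) less_imp_le[OF c0(2)] wn wo wE yhE yhn
  note CH = chain_op[where E=E and P=P and T="blinfun_apply T" and R=R and c=c and N=N and w=w and yh=yh]
  have SJ: "S (JJ z) = JJ (S z)" for z unfolding S_def A_def \<kappa>_def by (rule CH(2)) (fact hyps)+
  have Sn: "norm (S z) \<le> R * norm z" for z unfolding S_def A_def \<kappa>_def by (rule CH(3)) (fact hyps)+
  have SE: "S e = A e" if "e \<in> E" for e unfolding S_def A_def \<kappa>_def by (rule CH(4)) (fact hyps that)+
  have AE': "A z \<in> E" for z unfolding A_def by (rule CH(5)) (fact hyps)+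
  have Anorm: "norm (A z) \<le> c * R * norm z" for z unfolding A_def by (rule CH(6)) (fact hyps)+
  have Sw: "S (w j) = R *\<^sub>R w (Suc j)" if "j < N" for j unfolding S_def A_def \<kappa>_def by (rule CH(7)) (fact hyps that)+
  have SwN: "S (w N) = \<kappa> *\<^sub>R yh" unfolding S_def A_def \<kappa>_def by (rule CH(8)) (fact hyps)+
  have Sbl: "bounded_linear S" unfolding S_def A_def \<kappa>_def by (rule CH(1)) (fact hyps)+
  define Sb where "Sb = Blinfun S"
  have Sb: "blinfun_apply Sb = S" unfolding Sb_def by (rule bounded_linear_Blinfun_apply[OF Sbl])
  have Sc: "clinear_op Sb" unfolding clinear_op_iff Sb using SJ by simp
  have SR: "norm Sb \<le> R" by (rule norm_blinfun_bound) (use R Sn Sb in auto)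
  have Slin: "linear S" using Sbl by (rule bounded_linear.linear)
  have close: "norm (S (e i) - blinfun_apply T (e i)) < eps" if i: "i < m" for i
  proof -
    define e' where "e' = v' i"
    define f' where "f' = v' (m + i)"
    have e'e: "norm (e' - e i) = \<delta>" using v'[rule_format, of i] i by (simp add: e'_def v_def)
    have f'f: "norm (f' - blinfun_apply T (e i)) = \<delta>" using v'[rule_format, of "m + i"] i by (auto simp: f'_def v_def)
    have e'E: "e' \<in> E" using VE i by (simp add: e'_def)
    have f'E: "f' \<in> E" using VE i by (simp add: f'_def)
    have Pe': "P e' = e'" by (rule proj_fix[OF P(5) P(2)]) (use P(3) e'E in auto)
    have Se': "S e' = c *\<^sub>R P (blinfun_apply T e')"
      using SE[OF e'E] Pe' by (simp add: A_def)
    have ne': "norm e' \<le> M" using e'e eM[OF i] d0 norm_triangle_ineq2[of e' "e i"] by linarith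
    let ?Te = "blinfun_apply T e'"
    have b1: "norm (S (e i - e')) \<le> R * \<delta>"
      using Sn[of "e i - e'"] e'e by (simp add: norm_minus_commute)
    have b2: "norm (blinfun_apply T (e' - e i)) \<le> R * \<delta>" using Tn[of "e' - e i"] e'e by simp
    have b3: "norm (c *\<^sub>R P ?Te - P ?Te) \<le> (1 - c) * R * M"
    proof -
      have "c *\<^sub>R P ?Te - P ?Te = (c - 1) *\<^sub>R P ?Te" by (simp add: algebra_simps)
      then have "norm (c *\<^sub>R P ?Te - P ?Te) = (1 - c) * norm (P ?Te)" using c0 by simp
      also have "\<dots> \<le> (1 - c) * norm ?Te"
        using proj_le[of "P ?Te" E ?Te] P c0 by (intro mult_left_mono) auto
      also have "\<dots> \<le> (1 - c) * (R * M)"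
      proof (rule mult_left_mono)
        have "norm ?Te \<le> R * norm e'" by (rule Tn)
        also have "\<dots> \<le> R * M" using ne' R by simp
        finally show "norm ?Te \<le> R * M" .
      qed (use c0 in simp)
      finally show ?thesis by (simp add: mult.assoc)
    qed
    have b4: "norm (P ?Te - ?Te) \<le> R * \<delta> + \<delta>"
    proof -
      have "norm (?Te - P ?Te) \<le> norm (?Te - f')"
        using proj_best[OF P(5), of "P ?Te" ?Te f'] P(2,3) f'E by auto
      also have "\<dots> \<le> norm (?Te - blinfun_apply T (e i)) + norm (blinfun_apply T (e i) - f')"
        by (rule norm_diff_triangle_le[of _ "blinfun_apply T (e i)"]) simp_all
      also have "\<dots> \<le> R * \<delta> + \<delta>"
        using b2 f'f by (simp add: blinfun.diff_right norm_minus_commute)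
      finally show ?thesis by (simp add: norm_minus_commute)
    qed
    have eqd: "S (e i) - blinfun_apply T (e i) = S (e i - e') + (c *\<^sub>R P ?Te - P ?Te) + (P ?Te - ?Te) + blinfun_apply T (e' - e i)"
      using Se' by (simp add: linear_diff[OF Slin] blinfun.diff_right algebra_simps)
    have "norm (S (e i) - blinfun_apply T (e i)) \<le> R * \<delta> + (1 - c) * R * M + (R * \<delta> + \<delta>) + R * \<delta>"
      unfolding eqd using b1 b2 b3 b4 norm4[of "S (e i - e')" "c *\<^sub>R P ?Te - P ?Te" "P ?Te - ?Te" "blinfun_apply T (e' - e i)"]
      by linarith
    also have "\<dots> = (3 * R + 1) * \<delta> + (1 - c) * R * M" by (simp add: algebra_simps)
    also have "\<dots> < eps" using d1 c1 eps by linarith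
    finally show ?thesis .
  qed
  have PxE: "P x \<in> E" by (rule P(2))
  have AE: "\<And>z. z \<in> E \<Longrightarrow> A z \<in> E" using AE' by blast
  have xdec: "x = P x + norm xp *\<^sub>R w 0" using xp0 by (simp add: w_def xp_def)
  have orb: "(S ^^ n) x = (A ^^ n) (P x) + (norm xp * R ^ n) *\<^sub>R w n" if "n \<le> N" for n
    using that
  proof (induction n)
    case 0 then show ?case using xdec by simp
  next
    case (Suc n)
    then have nN: "n < N" by simp
    have "(S ^^ Suc n) x = S ((A ^^ n) (P x) + (norm xp * R ^ n) *\<^sub>R w n)" using Suc by simp
    also have "\<dots> = S ((A ^^ n) (P x)) + (norm xp * R ^ n) *\<^sub>R S (w n)"
      by (simp add: linear_add[OF Slin] linear_scale[OF Slin])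
    also have "\<dots> = (A ^^ Suc n) (P x) + (norm xp * R ^ Suc n) *\<^sub>R w (Suc n)"
      using SE[OF funpow_in[OF AE PxE, where n=n]] Sw[OF nN] by simp
    finally show ?case .
  qed
  have orbN: "(S ^^ Suc N) x = (A ^^ Suc N) (P x) + (norm xp * R ^ N * \<kappa>) *\<^sub>R yh"
  proof -
    have "(S ^^ Suc N) x = S ((A ^^ N) (P x) + (norm xp * R ^ N) *\<^sub>R w N)" using orb[of N] by simp
    also have "\<dots> = S ((A ^^ N) (P x)) + (norm xp * R ^ N) *\<^sub>R S (w N)"
      by (simp add: linear_add[OF Slin] linear_scale[OF Slin])
    also have "\<dots> = (A ^^ Suc N) (P x) + (norm xp * R ^ N * \<kappa>) *\<^sub>R yh"
      using SE[OF funpow_in[OF AE PxE, where n=N]] SwN by simp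
    finally show ?thesis .
  qed
  define \<rho> where "\<rho> = norm y' / (norm xp * R ^ N * \<kappa>)"
  have rho0: "\<rho> > 0" using y'0 xp0 R k0 by (simp add: \<rho>_def)
  have target: "\<rho> *\<^sub>R (S ^^ Suc N) x = \<rho> *\<^sub>R (A ^^ Suc N) (P x) + y'"
  proof -
    have "\<rho> * (norm xp * R ^ N * \<kappa>) = norm y'" using xp0 R k0 by (simp add: \<rho>_def)
    then have "(\<rho> * (norm xp * R ^ N * \<kappa>)) *\<^sub>R yh = y'" using y'0 by (simp add: yh_def)
    then have h: "\<rho> *\<^sub>R ((norm xp * R ^ N * \<kappa>) *\<^sub>R yh) = y'" by (simp only: scaleR_scaleR)
    show ?thesis unfolding orbN scaleR_add_right h ..
  qed
  have small: "norm (\<rho> *\<^sub>R (A ^^ Suc N) (P x)) < r / 2"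
  proof -
    have An: "norm ((A ^^ Suc N) (P x)) \<le> (c * R) ^ Suc N * norm (P x)"
      by (rule funpow_norm_bound) (use Anorm c0 R in auto)
    have "norm (P x) \<le> norm x" using proj_le[of "P x" E x] P by auto
    moreover have "(c * R) ^ Suc N \<ge> 0" using c0 R by simp
    ultimately have "norm ((A ^^ Suc N) (P x)) \<le> (c * R) ^ Suc N * norm x"
      using An by (meson mult_left_mono order_trans)
    then have "norm (\<rho> *\<^sub>R (A ^^ Suc N) (P x)) \<le> \<rho> * ((c * R) ^ Suc N * norm x)"
      using rho0 by (simp add: mult_left_mono)
    also have "\<dots> = (norm y' * R * norm x / (norm xp * \<kappa>)) * c ^ Suc N"
      using R by (simp add: \<rho>_def power_mult_distrib field_simps)
    also have "\<dots> \<le> (norm y' * R * norm x / (norm xp * \<kappa>)) * c ^ N"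
      using c0 y'0 R xp0 k0 by (intro mult_left_mono) (auto simp: power_decreasing)
    also have "\<dots> < (norm y' * R * norm x / (norm xp * \<kappa>)) * bnd"
      using N y'0 R x xp0 k0 by (intro mult_strict_left_mono) auto
    also have "\<dots> = r / 2" using y'0 R x xp0 k0 by (simp add: bnd_def field_simps)
    finally show ?thesis .
  qed
  have "dist (scaleC (complex_of_real \<rho>) ((blinfun_apply Sb ^^ Suc N) x)) y < r"
  proof -
    have "dist (scaleC (complex_of_real \<rho>) ((blinfun_apply Sb ^^ Suc N) x)) y
        = norm (\<rho> *\<^sub>R (A ^^ Suc N) (P x) + (y' - y))"
      unfolding Sb scaleC_of_real dist_norm target by (simp add: algebra_simps)
    also have "\<dots> \<le> norm (\<rho> *\<^sub>R (A ^^ Suc N) (P x)) + norm (y' - y)" by (rule norm_triangle_ineq)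
    also have "\<dots> < r" using small yy d0 by linarith
    finally show ?thesis .
  qed
  then show ?thesis using Sc SR close Sb by blast
qed

lemma sot_nbhd:
  fixes W :: "('a::complex_hilbert \<Rightarrow>\<^sub>L 'a) set"
  assumes "openin (subtopology strong_operator_topology B) W" "T \<in> W"
  shows "\<exists>F eps. finite F \<and> eps > 0 \<and> {S \<in> B. \<forall>z\<in>F. norm (blinfun_apply S z - blinfun_apply T z) < eps} \<subseteq> W"
proof -
  obtain U where U: "openin strong_operator_topology U" "W = U \<inter> B"
    using assms(1) by (auto simp: openin_subtopology)
  obtain V where V: "openin euclidean V" "U = blinfun_apply -` V \<inter> UNIV"
    using U(1) unfolding strong_operator_topology_def openin_pullback_topology by blast
  have TV: "blinfun_apply T \<in> V" using V U assms(2) by auto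
  have "openin (product_topology (\<lambda>_. euclidean) UNIV) V" using V(1) by (simp add: euclidean_product_topology)
  from product_topology_open_contains_basis[OF this TV] obtain X :: "'a \<Rightarrow> 'a set" where
    X: "blinfun_apply T \<in> (\<Pi>\<^sub>E i\<in>UNIV. X i)" "\<And>i. openin euclidean (X i)"
       "finite {i. X i \<noteq> topspace euclidean}" "(\<Pi>\<^sub>E i\<in>UNIV. X i) \<subseteq> V" by blast
  define F where "F = {i. X i \<noteq> UNIV}"
  have fin: "finite F" using X(3) by (simp add: F_def)
  have "\<forall>i\<in>F. \<exists>e>0. ball (blinfun_apply T i) e \<subseteq> X i"
  proof
    fix i assume "i \<in> F"
    have "open (X i)" using X(2) by simp
    moreover have "blinfun_apply T i \<in> X i" using X(1) by auto
    ultimately show "\<exists>e>0. ball (blinfun_apply T i) e \<subseteq> X i" by (simp add: open_contains_ball)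
  qed
  then obtain ee where ee: "\<And>i. i \<in> F \<Longrightarrow> ee i > 0 \<and> ball (blinfun_apply T i) (ee i) \<subseteq> X i" by metis
  define eps where "eps = Min (insert 1 (ee ` F))"
  have eps0: "eps > 0" unfolding eps_def using fin ee by (subst Min_gr_iff) auto
  have epsle: "eps \<le> ee i" if "i \<in> F" for i unfolding eps_def using fin that by (intro Min_le) auto
  have "{S \<in> B. \<forall>z\<in>F. norm (blinfun_apply S z - blinfun_apply T z) < eps} \<subseteq> W"
  proof
    fix S assume S: "S \<in> {S \<in> B. \<forall>z\<in>F. norm (blinfun_apply S z - blinfun_apply T z) < eps}"
    have "blinfun_apply S i \<in> X i" for i
    proof (cases "i \<in> F")
      case True
      then have "dist (blinfun_apply T i) (blinfun_apply S i) < ee i"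
        using S epsle[OF True] by (auto simp: dist_norm norm_minus_commute)
      then show ?thesis using ee[OF True] by auto
    next
      case False then show ?thesis by (simp add: F_def)
    qed
    then have "blinfun_apply S \<in> V" using X(4) by auto
    then show "S \<in> W" using S U V by auto
  qed
  then show ?thesis using fin eps0 by blast
qed

lemma continuous_map_eps:
  assumes "\<And>T e. T \<in> topspace X \<Longrightarrow> e > 0 \<Longrightarrow> \<exists>W. openin X W \<and> T \<in> W \<and> (\<forall>S\<in>W. dist (f S) (f T) < e)"
  shows "continuous_map X euclidean (f :: 'b \<Rightarrow> 'c::metric_space)"
  unfolding continuous_map_def
proof (intro conjI allI impI)
  show "f \<in> topspace X \<rightarrow> topspace euclidean" by simp
  fix U :: "'c set" assume "openin euclidean U"
  then have oU: "open U" by simp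
  show "openin X {x \<in> topspace X. f x \<in> U}"
  proof (subst openin_subopen, intro ballI)
    fix T assume T: "T \<in> {x \<in> topspace X. f x \<in> U}"
    then obtain e where e: "e > 0" "ball (f T) e \<subseteq> U" using oU open_contains_ball by blast
    obtain W where W: "openin X W" "T \<in> W" "\<forall>S\<in>W. dist (f S) (f T) < e" using assms[of T e] T e by auto
    have "W \<subseteq> {x \<in> topspace X. f x \<in> U}"
      using W e openin_subset[OF W(1)] by (auto simp: dist_commute subset_iff)
    then show "\<exists>Ta. openin X Ta \<and> T \<in> Ta \<and> Ta \<subseteq> {x \<in> topspace X. f x \<in> U}" using W by blast
  qed
qed

lemma continuous_map_eps_D:
  assumes "continuous_map X euclidean (f :: 'b \<Rightarrow> 'c::metric_space)" "T \<in> topspace X" "e > 0"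
  shows "\<exists>W. openin X W \<and> T \<in> W \<and> (\<forall>S\<in>W. dist (f S) (f T) < e)"
proof -
  have "openin X {x \<in> topspace X. f x \<in> ball (f T) e}"
    using assms(1) by (rule openin_continuous_map_preimage) simp
  then show ?thesis using assms(2,3) by (intro exI[of _ "{x \<in> topspace X. f x \<in> ball (f T) e}"]) (auto simp: dist_commute)
qed

lemma sot_eval_cont:
  "continuous_map (subtopology strong_operator_topology B) euclidean (\<lambda>T. blinfun_apply T v)"
  by (rule continuous_map_from_subtopology[OF strong_operator_topology_continuous_evaluation])

lemma sot_cont_power:
  fixes x :: "'a::complex_hilbert"
  assumes R: "R > 0"
  shows "continuous_map (subtopology strong_operator_topology (ball_ops R)) euclidean (\<lambda>T. (blinfun_apply T ^^ n) x)"
proof (induction n)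
  case 0 then show ?case by simp
next
  case (Suc n)
  let ?X = "subtopology strong_operator_topology (ball_ops R :: ('a \<Rightarrow>\<^sub>L 'a) set)"
  let ?f = "\<lambda>T. (blinfun_apply T ^^ n) x"
  show ?case
  proof (rule continuous_map_eps)
    fix T e assume T: "T \<in> topspace ?X" and e: "(e::real) > 0"
    obtain W1 where W1: "openin ?X W1" "T \<in> W1" "\<forall>S\<in>W1. dist (?f S) (?f T) < e / (2 * R)"
      using continuous_map_eps_D[OF Suc T, of "e / (2 * R)"] e R by auto
    obtain W2 where W2: "openin ?X W2" "T \<in> W2"
        "\<forall>S\<in>W2. dist (blinfun_apply S (?f T)) (blinfun_apply T (?f T)) < e / 2"
      using continuous_map_eps_D[OF sot_eval_cont T, of "e / 2"] e by auto
    have "\<forall>S\<in>W1 \<inter> W2. dist ((blinfun_apply S ^^ Suc n) x) ((blinfun_apply T ^^ Suc n) x) < e"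
    proof
      fix S assume S: "S \<in> W1 \<inter> W2"
      then have SB: "norm S \<le> R" using openin_subset[OF W1(1)] by (auto simp: ball_ops_def)
      have "dist ((blinfun_apply S ^^ Suc n) x) ((blinfun_apply T ^^ Suc n) x)
          = norm (blinfun_apply S (?f S - ?f T) + (blinfun_apply S (?f T) - blinfun_apply T (?f T)))"
        by (simp add: dist_norm blinfun.diff_right)
      also have "\<dots> \<le> norm (blinfun_apply S (?f S - ?f T)) + norm (blinfun_apply S (?f T) - blinfun_apply T (?f T))"
        by (rule norm_triangle_ineq)
      also have "norm (blinfun_apply S (?f S - ?f T)) \<le> R * (e / (2 * R))"
      proof -
        have "norm (blinfun_apply S (?f S - ?f T)) \<le> norm S * norm (?f S - ?f T)" by (rule norm_blinfun)
        also have "\<dots> \<le> R * norm (?f S - ?f T)" by (rule mult_right_mono[OF SB norm_ge_zero])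
        also have "\<dots> \<le> R * (e / (2 * R))" using W1(3) S R by (intro mult_left_mono) (auto simp: dist_norm)
        finally show ?thesis .
      qed
      also have "R * (e / (2 * R)) = e / 2" using R by simp
      finally show "dist ((blinfun_apply S ^^ Suc n) x) ((blinfun_apply T ^^ Suc n) x) < e"
        using W2(3) S by (auto simp: dist_norm)
    qed
    then show "\<exists>W. openin ?X W \<and> T \<in> W \<and> (\<forall>S\<in>W. dist ((blinfun_apply S ^^ Suc n) x) ((blinfun_apply T ^^ Suc n) x) < e)"
      using W1 W2 by (intro exI[of _ "W1 \<inter> W2"]) auto
  qed
qed

lemma bounded_linear_scaleC: "bounded_linear (scaleC a :: 'a::complex_hilbert \<Rightarrow> 'a)"
proof -
  have eq: "scaleC a = (\<lambda>v. Re a *\<^sub>R v + Im a *\<^sub>R JJ v)" by (rule ext) (simp add: scaleC_decomp)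
  show ?thesis unfolding eq
    by (intro bounded_linear_add bounded_linear_scaleR_right bounded_linear_ident
        bounded_linear_compose[OF bounded_linear_scaleR_right bounded_linear_JJ])
qed

lemma continuous_scaleC: "continuous_on UNIV (scaleC a :: 'a::complex_hilbert \<Rightarrow> 'a)"
  by (rule linear_continuous_on[OF bounded_linear_scaleC])

lemma topspace_X: "topspace (subtopology strong_operator_topology B) = B"
  by (simp add: strong_operator_topology_topspace topspace_subtopology)

definition Uset :: "real \<Rightarrow> 'a::complex_hilbert \<Rightarrow> 'a \<Rightarrow> real \<Rightarrow> ('a \<Rightarrow>\<^sub>L 'a) set" where
  "Uset R x y r = {T \<in> ball_ops R. \<exists>n a. dist (scaleC a ((blinfun_apply T ^^ n) x)) y < r}"

lemma Uset_open:
  assumes R: "R > 0"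
  shows "openin (subtopology strong_operator_topology (ball_ops R)) (Uset R x y r)"
proof -
  let ?X = "subtopology strong_operator_topology (ball_ops R :: ('a \<Rightarrow>\<^sub>L 'a) set)"
  have "Uset R x y r = (\<Union>n. \<Union>a. {T \<in> topspace ?X. scaleC a ((blinfun_apply T ^^ n) x) \<in> ball y r})"
    unfolding Uset_def topspace_X by (auto simp: dist_commute)
  moreover have "openin ?X {T \<in> topspace ?X. scaleC a ((blinfun_apply T ^^ n) x) \<in> ball y r}" for n a
  proof (rule openin_continuous_map_preimage[where Y=euclidean])
    have "continuous_map ?X euclidean (scaleC a \<circ> (\<lambda>T. (blinfun_apply T ^^ n) x))"
      by (rule continuous_map_compose[OF sot_cont_power[OF R]]) (simp add: continuous_scaleC)
    then show "continuous_map ?X euclidean (\<lambda>T. scaleC a ((blinfun_apply T ^^ n) x))" by (simp add: o_def)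
  qed simp
  ultimately show ?thesis by (auto intro!: openin_Union)
qed

lemma Uset_dense:
  assumes infdim: "infinite_dimensional TYPE('a::complex_hilbert)" and R: "R > 0" and x: "x \<noteq> 0" and r: "r > 0"
  shows "(subtopology strong_operator_topology (ball_ops R)) closure_of (Uset R x y r) =
          topspace (subtopology strong_operator_topology (ball_ops R :: ('a \<Rightarrow>\<^sub>L 'a) set))"
proof -
  let ?X = "subtopology strong_operator_topology (ball_ops R :: ('a \<Rightarrow>\<^sub>L 'a) set)"
  have "T \<in> ?X closure_of (Uset R x y r)" if T: "T \<in> ball_ops R" for T
    unfolding in_closure_of
  proof (intro conjI allI impI)
    show "T \<in> topspace ?X" using T unfolding topspace_X .
    fix W assume W: "T \<in> W \<and> openin ?X W"
    obtain F eps where F: "finite F" "eps > 0"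
      "{S \<in> ball_ops R. \<forall>z\<in>F. norm (blinfun_apply S z - blinfun_apply T z) < eps} \<subseteq> W"
      using sot_nbhd[of "ball_ops R" W T] W by blast
    obtain m e where me: "F = e ` {i. i < (m::nat)}" using finite_imp_nat_seg_image_inj_on[OF F(1)] by blast
    have Tc: "clinear_op T" "norm T \<le> R" using T by (auto simp: ball_ops_def)
    obtain S where S: "clinear_op S" "norm S \<le> R"
        "\<forall>i<m. norm (blinfun_apply S (e i) - blinfun_apply T (e i)) < eps"
        "\<exists>n a. dist (scaleC a ((blinfun_apply S ^^ n) x)) y < r"
      using density_step[OF infdim Tc R x r F(2), of m e y] by blast
    have "S \<in> W" using F(3) S me by (auto simp: ball_ops_def)
    moreover have "S \<in> Uset R x y r" using S by (auto simp: Uset_def ball_ops_def)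
    ultimately show "\<exists>S. S \<in> Uset R x y r \<and> S \<in> W" by blast
  qed
  moreover have "?X closure_of (Uset R x y r) \<subseteq> topspace ?X" by (rule closure_of_subset_topspace)
  ultimately show ?thesis unfolding topspace_X by auto
qed

lemma norm3: "norm (a + b + c) \<le> norm a + norm b + norm (c::'a::real_normed_vector)"
proof -
  have "norm (a + b + c) \<le> norm (a + b) + norm c" by (rule norm_triangle_ineq)
  also have "norm (a + b) \<le> norm a + norm b" by (rule norm_triangle_ineq)
  finally show ?thesis by simp
qed

lemma dense_seq_approx:
  assumes "closure (range dd) = UNIV" "e > 0"
  shows "\<exists>k. dist (dd k) z < e"
  using assms closure_approachable[of z "range dd"] by auto

lemma blinfun_eq_on_dense:
  fixes S T :: "'a::real_normed_vector \<Rightarrow>\<^sub>L 'b::real_normed_vector"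
  assumes dense: "closure (range dd) = UNIV" and eq: "\<And>k. blinfun_apply S (dd k) = blinfun_apply T (dd k)"
  shows "S = T"
proof -
  have cl: "closed {z. blinfun_apply (S - T) z = 0}"
    by (rule closed_Collect_eq) (auto intro: linear_continuous_on blinfun.bounded_linear_right)
  have "range dd \<subseteq> {z. blinfun_apply (S - T) z = 0}" using eq by (auto simp: blinfun.diff_left)
  then have "closure (range dd) \<subseteq> {z. blinfun_apply (S - T) z = 0}" using cl by (rule closure_minimal)
  then have "\<And>z. blinfun_apply (S - T) z = 0" using dense by auto
  then show ?thesis by (auto intro!: blinfun_eqI simp: blinfun.diff_left)
qed

lemma coord_tendsto:
  fixes s :: "nat \<Rightarrow> nat \<Rightarrow> 'a::metric_space"
  assumes "s \<longlonglongrightarrow> l" shows "(\<lambda>n. s n k) \<longlonglongrightarrow> l k"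
proof -
  have "continuous_on UNIV (\<lambda>x::nat \<Rightarrow> 'a. x k)" by simp
  then have "isCont (\<lambda>x::nat \<Rightarrow> 'a. x k) l"
    using continuous_on_eq_continuous_at[OF open_UNIV] by blast
  then show ?thesis using assms by (rule isCont_tendsto_compose)
qed

lemma ball_ops_closed_image:
  fixes dd :: "nat \<Rightarrow> 'a::complex_hilbert"
  assumes dense: "closure (range dd) = UNIV" and R: "R > 0"
  defines "\<Phi> \<equiv> (\<lambda>T::'a \<Rightarrow>\<^sub>L 'a. \<lambda>k. blinfun_apply T (dd k))"
  shows "closed (\<Phi> ` ball_ops R)"
proof (unfold closed_sequential_limits, intro allI impI, elim conjE)
  fix s :: "nat \<Rightarrow> nat \<Rightarrow> 'a" and l assume s: "\<forall>n. s n \<in> \<Phi> ` ball_ops R" and lim: "s \<longlonglongrightarrow> l"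
  have "\<forall>n. \<exists>T. T \<in> ball_ops R \<and> s n = \<Phi> T" using s by auto
  then obtain T where T: "\<And>n. T n \<in> ball_ops R" "\<And>n. s n = \<Phi> (T n)" by metis
  have TR: "norm (T n) \<le> R" and Tc: "clinear_op (T n)" for n using T(1)[of n] by (auto simp: ball_ops_def)
  have Tn: "norm (blinfun_apply (T n) z) \<le> R * norm z" for n z
  proof -
    have "norm (blinfun_apply (T n) z) \<le> norm (T n) * norm z" by (rule norm_blinfun)
    also have "\<dots> \<le> R * norm z" by (rule mult_right_mono[OF TR norm_ge_zero])
    finally show ?thesis .
  qed
  have coord: "(\<lambda>n. blinfun_apply (T n) (dd k)) \<longlonglongrightarrow> l k" for k
    using coord_tendsto[OF lim, of k] by (simp add: T(2) \<Phi>_def)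
  have cauchy: "Cauchy (\<lambda>n. blinfun_apply (T n) z)" for z
  proof (rule metric_CauchyI)
    fix e :: real assume e: "e > 0"
    obtain k where k: "dist (dd k) z < e / (4 * R)" using dense_seq_approx[OF dense, of "e / (4 * R)"] e R by auto
    have "Cauchy (\<lambda>n. blinfun_apply (T n) (dd k))" using coord[of k] by (rule LIMSEQ_imp_Cauchy)
    moreover have e2: "e / 2 > 0" using e by simp
    ultimately obtain M where M: "\<And>m n. m \<ge> M \<Longrightarrow> n \<ge> M \<Longrightarrow> dist (blinfun_apply (T m) (dd k)) (blinfun_apply (T n) (dd k)) < e / 2"
      unfolding Cauchy_def by blast
    have "dist (blinfun_apply (T m) z) (blinfun_apply (T n) z) < e" if "m \<ge> M" "n \<ge> M" for m n
    proof -
      have kk: "norm (z - dd k) \<le> e / (4 * R)" "norm (dd k - z) \<le> e / (4 * R)"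
        using k by (simp_all add: dist_norm norm_minus_commute)
      have a: "norm (blinfun_apply (T m) (z - dd k)) \<le> R * (e / (4 * R))"
        using Tn[of m "z - dd k"] mult_left_mono[OF kk(1), of R] R by linarith
      have b: "norm (blinfun_apply (T n) (dd k - z)) \<le> R * (e / (4 * R))"
        using Tn[of n "dd k - z"] mult_left_mono[OF kk(2), of R] R by linarith
      have eq: "blinfun_apply (T m) z - blinfun_apply (T n) z = blinfun_apply (T m) (z - dd k)
          + (blinfun_apply (T m) (dd k) - blinfun_apply (T n) (dd k)) + blinfun_apply (T n) (dd k - z)"
        by (simp add: blinfun.diff_right)
      have "norm (blinfun_apply (T m) z - blinfun_apply (T n) z) \<le> norm (blinfun_apply (T m) (z - dd k))
          + norm (blinfun_apply (T m) (dd k) - blinfun_apply (T n) (dd k)) + norm (blinfun_apply (T n) (dd k - z))"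
        unfolding eq by (rule norm3)
      moreover have "R * (e / (4 * R)) = e / 4" using R by simp
      ultimately show ?thesis using a b M[OF that] unfolding dist_norm by linarith
    qed
    then show "\<exists>M. \<forall>m\<ge>M. \<forall>n\<ge>M. dist (blinfun_apply (T m) z) (blinfun_apply (T n) z) < e" by blast
  qed
  define L where "L z = lim (\<lambda>n. blinfun_apply (T n) z)" for z
  have Llim: "(\<lambda>n. blinfun_apply (T n) z) \<longlonglongrightarrow> L z" for z
    unfolding L_def using cauchy[of z] by (simp add: Cauchy_convergent_iff convergent_LIMSEQ_iff)
  have Ladd: "L (a + b) = L a + L b" for a b
  proof -
    have "(\<lambda>n. blinfun_apply (T n) (a + b)) \<longlonglongrightarrow> L a + L b"
      using tendsto_add[OF Llim[of a] Llim[of b]] by (simp add: blinfun.add_right)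
    then show ?thesis using Llim[of "a + b"] LIMSEQ_unique by blast
  qed
  have Lscale: "L (t *\<^sub>R a) = t *\<^sub>R L a" for t a
  proof -
    have "(\<lambda>n. blinfun_apply (T n) (t *\<^sub>R a)) \<longlonglongrightarrow> t *\<^sub>R L a"
      using tendsto_scaleR[OF tendsto_const Llim[of a], of t] by (simp add: blinfun.scaleR_right)
    then show ?thesis using Llim[of "t *\<^sub>R a"] LIMSEQ_unique by blast
  qed
  have LJ: "L (JJ a) = JJ (L a)" for a
  proof -
    have "(\<lambda>n. JJ (blinfun_apply (T n) a)) \<longlonglongrightarrow> JJ (L a)"
      by (rule bounded_linear.tendsto[OF bounded_linear_JJ Llim])
    moreover have "JJ (blinfun_apply (T n) a) = blinfun_apply (T n) (JJ a)" for n
      using Tc[of n] by (simp add: clinear_op_iff)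
    ultimately have "(\<lambda>n. blinfun_apply (T n) (JJ a)) \<longlonglongrightarrow> JJ (L a)" by simp
    then show ?thesis using Llim[of "JJ a"] LIMSEQ_unique by blast
  qed
  have Lnorm: "norm (L a) \<le> R * norm a" for a
  proof (rule tendsto_upperbound)
    show "(\<lambda>n. norm (blinfun_apply (T n) a)) \<longlonglongrightarrow> norm (L a)" by (rule tendsto_norm[OF Llim])
    show "\<forall>\<^sub>F n in sequentially. norm (blinfun_apply (T n) a) \<le> R * norm a" using Tn by simp
  qed simp
  have Lbl: "bounded_linear L"
    by (rule bounded_linear_intro[where K=R]) (auto simp: Ladd Lscale Lnorm mult.commute)
  define Lb where "Lb = Blinfun L"
  have Lb: "blinfun_apply Lb = L" unfolding Lb_def by (rule bounded_linear_Blinfun_apply[OF Lbl])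
  have "Lb \<in> ball_ops R"
    unfolding ball_ops_def clinear_op_iff Lb using LJ by (auto intro!: norm_blinfun_bound simp: Lb Lnorm R less_imp_le)
  moreover have "\<Phi> Lb = l"
  proof
    fix k show "\<Phi> Lb k = l k"
      using Llim[of "dd k"] coord[of k] LIMSEQ_unique by (auto simp: \<Phi>_def Lb)
  qed
  ultimately show "l \<in> \<Phi> ` ball_ops R" by blast
qed

lemma X_completely_metrizable:
  fixes dd :: "nat \<Rightarrow> 'a::complex_hilbert"
  assumes dense: "closure (range dd) = UNIV" and R: "R > 0"
  shows "completely_metrizable_space (subtopology strong_operator_topology (ball_ops R :: ('a \<Rightarrow>\<^sub>L 'a) set))"
proof -
  let ?B = "ball_ops R :: ('a \<Rightarrow>\<^sub>L 'a) set"
  let ?X = "subtopology strong_operator_topology ?B"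
  define \<Phi> where "\<Phi> = (\<lambda>T::'a \<Rightarrow>\<^sub>L 'a. \<lambda>k. blinfun_apply T (dd k))"
  let ?Y = "subtopology euclidean (\<Phi> ` ?B)"
  define g where "g = inv_into ?B \<Phi>"
  have inj: "inj_on \<Phi> ?B"
    by (rule inj_onI) (use blinfun_eq_on_dense[OF dense] in \<open>auto simp: \<Phi>_def fun_eq_iff\<close>)
  have topX: "topspace ?X = ?B" by (rule topspace_X)
  have topY: "topspace ?Y = \<Phi> ` ?B" by simp
  have cPhi: "continuous_map ?X ?Y \<Phi>"
  proof (rule continuous_map_into_subtopology)
    have "continuous_map ?X (product_topology (\<lambda>_. euclidean) UNIV) \<Phi>"
      unfolding continuous_map_componentwise_UNIV \<Phi>_def by (auto intro: sot_eval_cont)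
    then show "continuous_map ?X euclidean \<Phi>" by (simp add: euclidean_product_topology)
    show "\<Phi> \<in> topspace ?X \<rightarrow> \<Phi> ` ?B" using topX by auto
  qed
  have gPhi: "g (\<Phi> T) = T" if "T \<in> ?B" for T unfolding g_def using inj that by (rule inv_into_f_f)
  have cg: "continuous_map ?Y ?X g"
  proof (rule continuous_map_into_subtopology)
    show "g \<in> topspace ?Y \<rightarrow> ?B" unfolding topY g_def by (auto intro: inv_into_into)
    show "continuous_map ?Y strong_operator_topology g"
      unfolding continuous_on_strong_operator_topo_iff_coordinatewise
    proof
      fix z :: 'a
      show "continuous_map ?Y euclidean (\<lambda>y. blinfun_apply (g y) z)"
      proof (rule continuous_map_eps)
        fix \<phi> and e :: real assume \<phi>: "\<phi> \<in> topspace ?Y" and e: "e > 0"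
        obtain T0 where T0: "T0 \<in> ?B" "\<phi> = \<Phi> T0" using \<phi> topY by auto
        obtain k where k: "dist (dd k) z < e / (3 * R)" using dense_seq_approx[OF dense, of "e / (3 * R)"] e R by auto
        have ck: "continuous_map ?Y euclidean (\<lambda>\<psi>. \<psi> k)"
          by (rule continuous_map_from_subtopology) simp
        obtain W where W: "openin ?Y W" "\<phi> \<in> W" "\<forall>\<psi>\<in>W. dist (\<psi> k) (\<phi> k) < e / 3"
          using continuous_map_eps_D[OF ck \<phi>, of "e / 3"] e by auto
        have "dist (blinfun_apply (g \<psi>) z) (blinfun_apply (g \<phi>) z) < e" if \<psi>: "\<psi> \<in> W" for \<psi>
        proof -
          have "\<psi> \<in> \<Phi> ` ?B" using openin_subset[OF W(1)] \<psi> by auto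
          then obtain T where T: "T \<in> ?B" "\<psi> = \<Phi> T" by auto
          have gs: "g \<psi> = T" "g \<phi> = T0" using gPhi T T0 by auto
          have Tn: "norm (blinfun_apply S v) \<le> R * norm v" if "S \<in> ?B" for S v
          proof -
            have "norm (blinfun_apply S v) \<le> norm S * norm v" by (rule norm_blinfun)
            also have "\<dots> \<le> R * norm v" using that by (intro mult_right_mono) (auto simp: ball_ops_def)
            finally show ?thesis .
          qed
          have kk: "norm (z - dd k) \<le> e / (3 * R)" "norm (dd k - z) \<le> e / (3 * R)"
            using k by (simp_all add: dist_norm norm_minus_commute)
          have a: "norm (blinfun_apply T (z - dd k)) \<le> R * (e / (3 * R))"
            using Tn[OF T(1), of "z - dd k"] mult_left_mono[OF kk(1), of R] R by linarith
          have b: "norm (blinfun_apply T0 (dd k - z)) \<le> R * (e / (3 * R))"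
            using Tn[OF T0(1), of "dd k - z"] mult_left_mono[OF kk(2), of R] R by linarith
          have c: "norm (blinfun_apply T (dd k) - blinfun_apply T0 (dd k)) < e / 3"
            using W(3) \<psi> T T0 by (auto simp: \<Phi>_def dist_norm)
          have eq: "blinfun_apply T z - blinfun_apply T0 z = blinfun_apply T (z - dd k)
              + (blinfun_apply T (dd k) - blinfun_apply T0 (dd k)) + blinfun_apply T0 (dd k - z)"
            by (simp add: blinfun.diff_right)
          have "norm (blinfun_apply T z - blinfun_apply T0 z) \<le> norm (blinfun_apply T (z - dd k))
              + norm (blinfun_apply T (dd k) - blinfun_apply T0 (dd k)) + norm (blinfun_apply T0 (dd k - z))"
            unfolding eq by (rule norm3)
          moreover have "R * (e / (3 * R)) = e / 3" using R by simp
          ultimately show ?thesis using a b c unfolding dist_norm gs by linarith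
        qed
        then show "\<exists>W. openin ?Y W \<and> \<phi> \<in> W \<and> (\<forall>\<psi>\<in>W. dist (blinfun_apply (g \<psi>) z) (blinfun_apply (g \<phi>) z) < e)"
          using W by blast
      qed
    qed
  qed
  have hm: "homeomorphic_maps ?X ?Y \<Phi> g"
    unfolding homeomorphic_maps_def
  proof (intro conjI ballI)
    show "continuous_map ?X ?Y \<Phi>" by (rule cPhi)
    show "continuous_map ?Y ?X g" by (rule cg)
    fix T assume "T \<in> topspace ?X" then show "g (\<Phi> T) = T" using gPhi topX by auto
  next
    fix y assume "y \<in> topspace ?Y" then show "\<Phi> (g y) = y" unfolding g_def topY by (rule f_inv_into_f)
  qed
  have cY: "completely_metrizable_space ?Y"
  proof (rule completely_metrizable_space_closedin)
    show "completely_metrizable_space (euclidean :: (nat \<Rightarrow> 'a) topology)" by (rule completely_metrizable_space_euclidean)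
    show "closedin euclidean (\<Phi> ` ?B)" using ball_ops_closed_image[OF dense R] by (simp add: \<Phi>_def)
  qed
  show ?thesis
    using homeomorphic_completely_metrizable_space[OF homeomorphic_maps_imp_homeomorphic_space[OF hm]] cY by simp
qed

lemma sc_char:
  fixes T :: "'a::complex_hilbert \<Rightarrow>\<^sub>L 'a"
  assumes dense: "closure (range dd) = UNIV"
  shows "supercyclic T x \<longleftrightarrow> (\<forall>j m. \<exists>n a. dist (scaleC a ((blinfun_apply T ^^ n) x)) (dd j) < 1 / Suc m)"
proof
  assume "supercyclic T x"
  then have cl: "closure {scaleC a ((blinfun_apply T ^^ n) x) | a n. True} = UNIV" by (simp add: supercyclic_def)
  show "\<forall>j m. \<exists>n a. dist (scaleC a ((blinfun_apply T ^^ n) x)) (dd j) < 1 / Suc m"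
  proof (intro allI)
    fix j m
    have "dd j \<in> closure {scaleC a ((blinfun_apply T ^^ n) x) | a n. True}" using cl by simp
    moreover have "1 / real (Suc m) > 0" by simp
    ultimately obtain c where "c \<in> {scaleC a ((blinfun_apply T ^^ n) x) | a n. True}" "dist c (dd j) < 1 / Suc m"
      unfolding closure_approachable by blast
    then show "\<exists>n a. dist (scaleC a ((blinfun_apply T ^^ n) x)) (dd j) < 1 / Suc m" by auto
  qed
next
  assume H: "\<forall>j m. \<exists>n a. dist (scaleC a ((blinfun_apply T ^^ n) x)) (dd j) < 1 / Suc m"
  have "z \<in> closure {scaleC a ((blinfun_apply T ^^ n) x) | a n. True}" for z
    unfolding closure_approachable
  proof (intro allI impI)
    fix e :: real assume e: "e > 0"
    obtain j where j: "dist (dd j) z < e / 2" using dense_seq_approx[OF dense, of "e/2"] e by auto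
    obtain m where m: "inverse (real (Suc m)) < e / 2" using reals_Archimedean[of "e/2"] e by auto
    obtain n a where na: "dist (scaleC a ((blinfun_apply T ^^ n) x)) (dd j) < 1 / Suc m" using H by blast
    have m': "1 / real (Suc m) < e / 2" using m by (simp add: inverse_eq_divide)
    have "dist (scaleC a ((blinfun_apply T ^^ n) x)) z < e"
      using dist_triangle[of "scaleC a ((blinfun_apply T ^^ n) x)" z "dd j"] j m' na by linarith
    then show "\<exists>y\<in>{scaleC a ((blinfun_apply T ^^ n) x) | a n. True}. dist y z < e" by blast
  qed
  then show "supercyclic T x" by (auto simp: supercyclic_def)
qed

lemma continuous_funpow_blinfun:
  fixes T :: "'a::real_normed_vector \<Rightarrow>\<^sub>L 'a"
  shows "continuous_on UNIV (blinfun_apply T ^^ n)"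
proof (induction n)
  case 0 then show ?case by (simp add: id_def)
next
  case (Suc n)
  have cT: "continuous_on UNIV (blinfun_apply T)" by (rule linear_continuous_on[OF blinfun.bounded_linear_right])
  have "continuous_on UNIV (blinfun_apply T \<circ> (blinfun_apply T ^^ n))"
    by (rule continuous_on_compose[OF Suc continuous_on_subset[OF cT]]) simp
  then show ?case by simp
qed

theorem corollary2:
  fixes D :: "'a::complex_hilbert set" and R :: real
  assumes separable: "separable_space (euclidean :: 'a topology)"
    and infdim: "infinite_dimensional TYPE('a)"
    and D_countable: "countable D"
    and D_nonzero: "0 \<notin> D"
    and D_dense: "closure D = UNIV"
    and R_pos: "R > 0"
  shows "gdelta_in (subtopology strong_operator_topology (ball_ops R))
           {T \<in> ball_ops R. \<forall>x\<in>D. supercyclic T x}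
       \<and> (subtopology strong_operator_topology (ball_ops R)) closure_of
           {T \<in> ball_ops R. \<forall>x\<in>D. supercyclic T x}
         = topspace (subtopology strong_operator_topology (ball_ops R))
       \<and> (\<forall>T \<in> {T \<in> ball_ops R. \<forall>x\<in>D. supercyclic T x}. residual {x. supercyclic T x})"
proof -
  have Dne: "D \<noteq> {}" using D_dense by auto
  define dd where "dd = from_nat_into D"
  have rdd: "range dd = D" using Dne D_countable by (simp add: dd_def)
  have dense: "closure (range dd) = UNIV" using rdd D_dense by simp
  let ?X = "subtopology strong_operator_topology (ball_ops R :: ('a \<Rightarrow>\<^sub>L 'a) set)"
  define G where "G = (\<lambda>(x, j, m). Uset R x (dd j) (1 / real (Suc m))) ` (D \<times> (UNIV :: nat set) \<times> (UNIV :: nat set))"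
  have Gc: "countable G" unfolding G_def using D_countable by simp
  have Gne: "G \<noteq> {}" using Dne by (auto simp: G_def)
  have Gopen: "\<And>U. U \<in> G \<Longrightarrow> openin ?X U" using Uset_open[OF R_pos] by (auto simp: G_def)
  have Gdense: "\<And>U. U \<in> G \<Longrightarrow> ?X closure_of U = topspace ?X"
  proof -
    fix U assume "U \<in> G"
    then obtain x j m where U: "U = Uset R x (dd j) (1 / real (Suc m))" "x \<in> D" by (auto simp: G_def)
    have "x \<noteq> 0" using U(2) D_nonzero by auto
    then show "?X closure_of U = topspace ?X" unfolding U(1) by (rule Uset_dense[OF infdim R_pos]) simp
  qed
  have Leq: "{T \<in> ball_ops R. \<forall>x\<in>D. supercyclic T x} = \<Inter>G"
  proof
    show "{T \<in> ball_ops R. \<forall>x\<in>D. supercyclic T x} \<subseteq> \<Inter>G"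
    proof
      fix T assume T: "T \<in> {T \<in> ball_ops R. \<forall>x\<in>D. supercyclic T x}"
      show "T \<in> \<Inter>G"
      proof
        fix U assume "U \<in> G"
        then obtain x j m where U: "U = Uset R x (dd j) (1 / real (Suc m))" "x \<in> D" by (auto simp: G_def)
        have "supercyclic T x" using T U(2) by auto
        then have "\<exists>n a. dist (scaleC a ((blinfun_apply T ^^ n) x)) (dd j) < 1 / Suc m"
          using sc_char[OF dense] by blast
        then show "T \<in> U" using T U(1) by (auto simp: Uset_def)
      qed
    qed
    show "\<Inter>G \<subseteq> {T \<in> ball_ops R. \<forall>x\<in>D. supercyclic T x}"
    proof
      fix T assume T: "T \<in> \<Inter>G"
      have inU: "T \<in> Uset R x (dd j) (1 / real (Suc m))" if "x \<in> D" for x j m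
        using T that by (auto simp: G_def)
      obtain x0 where "x0 \<in> D" using Dne by auto
      then have "T \<in> ball_ops R" using inU[of x0 0 0] by (simp add: Uset_def)
      moreover have "supercyclic T x" if "x \<in> D" for x
        unfolding sc_char[OF dense] using inU[OF that] by (auto simp: Uset_def)
      ultimately show "T \<in> {T \<in> ball_ops R. \<forall>x\<in>D. supercyclic T x}" by blast
    qed
  qed
  have cm: "completely_metrizable_space ?X" by (rule X_completely_metrizable[OF dense R_pos])
  have part1: "gdelta_in ?X (\<Inter>G)"
    by (rule gdelta_in_Inter[OF Gc Gne]) (use Gopen open_imp_gdelta_in in auto)
  have part2: "?X closure_of \<Inter>G = topspace ?X"
    by (rule Baire_category) (use cm Gc Gopen Gdense in auto)
  have part3: "residual {x. supercyclic T x}" if T: "T \<in> {T \<in> ball_ops R. \<forall>x\<in>D. supercyclic T x}" for T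
  proof -
    define V where "V k = {z. \<exists>n a. dist (scaleC a ((blinfun_apply T ^^ n) z)) (dd (fst (prod_decode k)))
                               < 1 / real (Suc (snd (prod_decode k)))}" for k
    have "open (V k)" for k
    proof -
      have "V k = (\<Union>n. \<Union>a. (\<lambda>z. scaleC a ((blinfun_apply T ^^ n) z)) -` ball (dd (fst (prod_decode k))) (1 / real (Suc (snd (prod_decode k)))))"
        unfolding V_def by (rule set_eqI) (simp add: dist_commute)
      moreover have ov: "open ((\<lambda>z. scaleC a ((blinfun_apply T ^^ n) z)) -` ball c r)" for n a c r
      proof (rule open_vimage)
        have "continuous_on UNIV (scaleC a \<circ> (blinfun_apply T ^^ n))"
          by (rule continuous_on_compose[OF continuous_funpow_blinfun continuous_on_subset[OF continuous_scaleC]]) simp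
        then show "continuous_on UNIV (\<lambda>z. scaleC a ((blinfun_apply T ^^ n) z))" by (simp add: o_def)
      qed simp
      ultimately show ?thesis by (simp only:) (intro open_UN ballI ov)
    qed
    moreover have "closure (V k) = UNIV" for k
    proof -
      have "D \<subseteq> V k"
      proof
        fix x assume "x \<in> D"
        then have "supercyclic T x" using T by auto
        then show "x \<in> V k" unfolding sc_char[OF dense] V_def by blast
      qed
      then have "closure D \<subseteq> closure (V k)" by (rule closure_mono)
      then show ?thesis using D_dense by auto
    qed
    moreover have "(\<Inter>k. V k) \<subseteq> {x. supercyclic T x}"
    proof
      fix z assume z: "z \<in> (\<Inter>k. V k)"
      have "\<exists>n a. dist (scaleC a ((blinfun_apply T ^^ n) z)) (dd j) < 1 / Suc m" for j m
      proof -
        have "z \<in> V (prod_encode (j, m))" using z by blast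
        then show ?thesis by (simp add: V_def)
      qed
      then show "z \<in> {x. supercyclic T x}" using sc_char[OF dense] by blast
    qed
    ultimately show ?thesis unfolding residual_def by (intro exI[of _ V]) simp
  qed
  have p3: "\<forall>T \<in> {T \<in> ball_ops R. \<forall>x\<in>D. supercyclic T x}. residual {x. supercyclic T x}"
    using part3 by blast
  show ?thesis unfolding Leq using part1 part2 p3 Leq by simp
qed

end
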